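(* Let $P=\{S_1,\ldots,S_n\}$ be a homothetic square packing with contact graph $G=([n],E)$ whose radii satisfy the weak generic condition. If either of the graphs $([n],E_x)$, $([n],E_y)$ contains a cycle $(n_1,\ldots,n_k)$ with $k\ge n-1$, then $|E|\le 2n-2$.
   Context: Let $S=\{(x,y): -1\le x,y\le 1\}$. A homothetic packing of $n$ squares is a set $P=\{S_1,\ldots,S_n\}$ with $S_i=r_iS+p_i$, $r_i>0$ (radii), $p_i=(x_i,y_i)\in\mathbb{R}^2$ (centres), such that distinct squares have disjoint interiors. Its contact graph is $G=([n],E)$ where $\{i,j\}\in E$ iff $i\ne j$ and $S_i\cap S_j\ne\emptyset$; $E_x$ is the set of pairs $\{i,j\}\in E$ with $r_i+r_j=|x_i-x_j|\ge|y_i-y_j|$ and $E_y$ the set with $r_i+r_j=|y_i-y_j|\ge|x_i-x_j|$. The radii satisfy the weak generic condition if the only function $\sigma:[n]\to\{-1,0,1\}$ with at least $4$ zeroes and $\sum_{i=1}^n\sigma_ir_i=0$ is the zero function. *)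

theory Defs
  imports "HOL-Analysis.Analysis"
begin

text \<open>Squares are indexed by [n] = {0..<n}. Square i has radius r i and centre (x i, y i):
  it is r i * S + (x i, y i) with S = [-1,1]^2.\<close>

definition sq :: "(nat \<Rightarrow> real) \<Rightarrow> (nat \<Rightarrow> real) \<Rightarrow> (nat \<Rightarrow> real) \<Rightarrow> nat \<Rightarrow> (real \<times> real) set" where
  "sq r x y i = {(u, v). \<bar>u - x i\<bar> \<le> r i \<and> \<bar>v - y i\<bar> \<le> r i}"

definition homothetic_packing :: "nat \<Rightarrow> (nat \<Rightarrow> real) \<Rightarrow> (nat \<Rightarrow> real) \<Rightarrow> (nat \<Rightarrow> real) \<Rightarrow> bool" where
  "homothetic_packing n r x y \<longleftrightarrow>
     (\<forall>i<n. r i > 0) \<and>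
     (\<forall>i<n. \<forall>j<n. i \<noteq> j \<longrightarrow> interior (sq r x y i) \<inter> interior (sq r x y j) = {})"

definition contact_edges :: "nat \<Rightarrow> (nat \<Rightarrow> real) \<Rightarrow> (nat \<Rightarrow> real) \<Rightarrow> (nat \<Rightarrow> real) \<Rightarrow> nat set set" where
  "contact_edges n r x y =
     {{i, j} | i j. i < n \<and> j < n \<and> i \<noteq> j \<and> sq r x y i \<inter> sq r x y j \<noteq> {}}"

definition edges_x :: "nat \<Rightarrow> (nat \<Rightarrow> real) \<Rightarrow> (nat \<Rightarrow> real) \<Rightarrow> (nat \<Rightarrow> real) \<Rightarrow> nat set set" where
  "edges_x n r x y =
     {{i, j} | i j. {i, j} \<in> contact_edges n r x y \<and>
        r i + r j = \<bar>x i - x j\<bar> \<and> \<bar>x i - x j\<bar> \<ge> \<bar>y i - y j\<bar>}"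

definition edges_y :: "nat \<Rightarrow> (nat \<Rightarrow> real) \<Rightarrow> (nat \<Rightarrow> real) \<Rightarrow> (nat \<Rightarrow> real) \<Rightarrow> nat set set" where
  "edges_y n r x y =
     {{i, j} | i j. {i, j} \<in> contact_edges n r x y \<and>
        r i + r j = \<bar>y i - y j\<bar> \<and> \<bar>y i - y j\<bar> \<ge> \<bar>x i - x j\<bar>}"

definition weak_generic :: "nat \<Rightarrow> (nat \<Rightarrow> real) \<Rightarrow> bool" where
  "weak_generic n r \<longleftrightarrow>
     (\<forall>\<sigma> :: nat \<Rightarrow> int.
        (\<forall>i<n. \<sigma> i \<in> {-1, 0, 1}) \<and> card {i. i < n \<and> \<sigma> i = 0} \<ge> 4 \<and>
        (\<Sum>i<n. of_int (\<sigma> i) * r i) = 0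
        \<longrightarrow> (\<forall>i<n. \<sigma> i = 0))"

definition is_cycle :: "nat \<Rightarrow> nat set set \<Rightarrow> nat list \<Rightarrow> bool" where
  "is_cycle n Ed c \<longleftrightarrow>
     length c \<ge> 3 \<and> distinct c \<and> set c \<subseteq> {..<n} \<and>
     (\<forall>i < length c. {c ! i, c ! ((i + 1) mod length c)} \<in> Ed)"

end

theory Submission
  imports Defs
begin


lemma interior_sq: "interior (sq r x y i) = {(u,v). \<bar>u - x i\<bar> < r i \<and> \<bar>v - y i\<bar> < r i}"
proof -
  have "sq r x y i = {x i - r i .. x i + r i} \<times> {y i - r i .. y i + r i}"
    unfolding sq_def by (auto simp: abs_le_iff)
  then have "interior (sq r x y i) = {x i - r i <..< x i + r i} \<times> {y i - r i <..< y i + r i}"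
    by (simp add: interior_Times)
  then show ?thesis by (auto simp: abs_less_iff)
qed

lemma overlap_point:
  fixes a b ra rb :: real
  assumes "ra > 0" "rb > 0"
  shows "\<bar>(a*rb + b*ra)/(ra+rb) - a\<bar> = ra * \<bar>b - a\<bar> / (ra + rb)"
    and "\<bar>(a*rb + b*ra)/(ra+rb) - b\<bar> = rb * \<bar>b - a\<bar> / (ra + rb)"
proof -
  have "(a*rb + b*ra)/(ra+rb) - a = ra * (b - a) / (ra + rb)" using assms by (simp add: field_simps)
  then show "\<bar>(a*rb + b*ra)/(ra+rb) - a\<bar> = ra * \<bar>b - a\<bar> / (ra + rb)" using assms by (simp add: abs_mult)
  have "(a*rb + b*ra)/(ra+rb) - b = rb * (a - b) / (ra + rb)" using assms by (simp add: field_simps)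
  then show "\<bar>(a*rb + b*ra)/(ra+rb) - b\<bar> = rb * \<bar>b - a\<bar> / (ra + rb)" using assms by (simp add: abs_mult abs_minus_commute)
qed

lemma lt_point:
  fixes a b ra rb :: real
  assumes "ra > 0" "rb > 0" "\<bar>a - b\<bar> < ra + rb"
  shows "\<exists>u. \<bar>u - a\<bar> < ra \<and> \<bar>u - b\<bar> < rb"
proof -
  have q: "\<bar>b - a\<bar> / (ra + rb) < 1" using assms by (simp add: abs_minus_commute)
  have "ra * (\<bar>b - a\<bar> / (ra + rb)) < ra * 1" using q assms by (intro mult_strict_left_mono) auto
  moreover have "rb * (\<bar>b - a\<bar> / (ra + rb)) < rb * 1" using q assms by (intro mult_strict_left_mono) auto
  ultimately show ?thesis using overlap_point[OF assms(1,2), of a b]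
    by (intro exI[of _ "(a*rb + b*ra)/(ra+rb)"]) (simp add: times_divide_eq_right)
qed

lemma le_point:
  fixes a b ra rb :: real
  assumes "ra > 0" "rb > 0" "\<bar>a - b\<bar> \<le> ra + rb"
  shows "\<exists>u. \<bar>u - a\<bar> \<le> ra \<and> \<bar>u - b\<bar> \<le> rb"
proof -
  have q: "\<bar>b - a\<bar> / (ra + rb) \<le> 1" using assms by (simp add: abs_minus_commute)
  have "ra * (\<bar>b - a\<bar> / (ra + rb)) \<le> ra * 1" using q assms by (intro mult_left_mono) auto
  moreover have "rb * (\<bar>b - a\<bar> / (ra + rb)) \<le> rb * 1" using q assms by (intro mult_left_mono) auto
  ultimately show ?thesis using overlap_point[OF assms(1,2), of a b]
    by (intro exI[of _ "(a*rb + b*ra)/(ra+rb)"]) (simp add: times_divide_eq_right)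
qed

definition sep :: "(nat \<Rightarrow> real) \<Rightarrow> (nat \<Rightarrow> real) \<Rightarrow> (nat \<Rightarrow> real) \<Rightarrow> nat \<Rightarrow> nat \<Rightarrow> bool" where
  "sep r x y i j \<longleftrightarrow> r i + r j \<le> \<bar>x i - x j\<bar> \<or> r i + r j \<le> \<bar>y i - y j\<bar>"

lemma packing_iff:
  "homothetic_packing n r x y \<longleftrightarrow> (\<forall>i<n. r i > 0) \<and> (\<forall>i<n. \<forall>j<n. i \<noteq> j \<longrightarrow> sep r x y i j)"
proof (cases "\<forall>i<n. r i > 0")
  case pos: True
  have "interior (sq r x y i) \<inter> interior (sq r x y j) = {} \<longleftrightarrow> sep r x y i j" if ij: "i<n" "j<n" for i j
  proof
    assume d: "interior (sq r x y i) \<inter> interior (sq r x y j) = {}"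
    show "sep r x y i j"
    proof (rule ccontr)
      assume "\<not> sep r x y i j"
      then have h1: "\<bar>x i - x j\<bar> < r i + r j" and h2: "\<bar>y i - y j\<bar> < r i + r j" by (auto simp: sep_def)
      obtain u where u: "\<bar>u - x i\<bar> < r i" "\<bar>u - x j\<bar> < r j" using lt_point[OF _ _ h1] pos ij by auto
      obtain v where v: "\<bar>v - y i\<bar> < r i" "\<bar>v - y j\<bar> < r j" using lt_point[OF _ _ h2] pos ij by auto
      have "(u,v) \<in> interior (sq r x y i) \<inter> interior (sq r x y j)" using u v by (simp add: interior_sq)
      then show False using d by auto
    qed
  next
    assume s: "sep r x y i j"
    show "interior (sq r x y i) \<inter> interior (sq r x y j) = {}"
    proof (rule ccontr)
      assume "interior (sq r x y i) \<inter> interior (sq r x y j) \<noteq> {}"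
      then obtain u v where "(u,v) \<in> interior (sq r x y i)" "(u,v) \<in> interior (sq r x y j)" by auto
      then have "\<bar>u - x i\<bar> < r i" "\<bar>u - x j\<bar> < r j" "\<bar>v - y i\<bar> < r i" "\<bar>v - y j\<bar> < r j"
        by (auto simp: interior_sq)
      then have "\<bar>x i - x j\<bar> < r i + r j" "\<bar>y i - y j\<bar> < r i + r j" by linarith+
      then show False using s by (auto simp: sep_def)
    qed
  qed
  then show ?thesis unfolding homothetic_packing_def using pos by simp
next
  case False
  then show ?thesis unfolding homothetic_packing_def by auto
qed

lemma contact_iff:
  assumes "\<forall>i<n. r i > 0"
  shows "{i,j} \<in> contact_edges n r x y \<longleftrightarrow>
    i < n \<and> j < n \<and> i \<noteq> j \<and> \<bar>x i - x j\<bar> \<le> r i + r j \<and> \<bar>y i - y j\<bar> \<le> r i + r j"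
proof -
  have key: "sq r x y i \<inter> sq r x y j \<noteq> {} \<longleftrightarrow> \<bar>x i - x j\<bar> \<le> r i + r j \<and> \<bar>y i - y j\<bar> \<le> r i + r j"
    if ij: "i<n" "j<n" for i j
  proof
    assume "sq r x y i \<inter> sq r x y j \<noteq> {}"
    then obtain u v where "(u,v) \<in> sq r x y i" "(u,v) \<in> sq r x y j" by auto
    then have "\<bar>u - x i\<bar> \<le> r i" "\<bar>u - x j\<bar> \<le> r j" "\<bar>v - y i\<bar> \<le> r i" "\<bar>v - y j\<bar> \<le> r j"
      by (auto simp: sq_def)
    then show "\<bar>x i - x j\<bar> \<le> r i + r j \<and> \<bar>y i - y j\<bar> \<le> r i + r j" by linarith
  next
    assume h: "\<bar>x i - x j\<bar> \<le> r i + r j \<and> \<bar>y i - y j\<bar> \<le> r i + r j"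
    obtain u where u: "\<bar>u - x i\<bar> \<le> r i" "\<bar>u - x j\<bar> \<le> r j" using le_point[of "r i" "r j" "x i" "x j"] h assms ij by auto
    obtain v where v: "\<bar>v - y i\<bar> \<le> r i" "\<bar>v - y j\<bar> \<le> r j" using le_point[of "r i" "r j" "y i" "y j"] h assms ij by auto
    have "(u,v) \<in> sq r x y i \<inter> sq r x y j" using u v by (simp add: sq_def)
    then show "sq r x y i \<inter> sq r x y j \<noteq> {}" by auto
  qed
  show ?thesis
  proof
    assume "{i,j} \<in> contact_edges n r x y"
    then obtain i' j' where e: "{i,j} = {i',j'}" "i' < n" "j' < n" "i' \<noteq> j'" "sq r x y i' \<inter> sq r x y j' \<noteq> {}"
      unfolding contact_edges_def by blast
    from e(1) have "(i = i' \<and> j = j') \<or> (i = j' \<and> j = i')" by (auto simp: doubleton_eq_iff)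
    then show "i < n \<and> j < n \<and> i \<noteq> j \<and> \<bar>x i - x j\<bar> \<le> r i + r j \<and> \<bar>y i - y j\<bar> \<le> r i + r j"
    proof
      assume "i = i' \<and> j = j'" then show ?thesis using e key[of i' j'] by auto
    next
      assume "i = j' \<and> j = i'"
      moreover have "\<bar>x j - x i\<bar> = \<bar>x i - x j\<bar>" "\<bar>y j - y i\<bar> = \<bar>y i - y j\<bar>" "r j + r i = r i + r j" by auto
      ultimately show ?thesis using e key[of i' j'] by auto
    qed
  next
    assume "i < n \<and> j < n \<and> i \<noteq> j \<and> \<bar>x i - x j\<bar> \<le> r i + r j \<and> \<bar>y i - y j\<bar> \<le> r i + r j"
    then show "{i,j} \<in> contact_edges n r x y" unfolding contact_edges_def using key by blast
  qed
qed

lemma contact_edges_form: "e \<in> contact_edges n r x y \<Longrightarrow> \<exists>i j. e = {i,j} \<and> i < n \<and> j < n \<and> i \<noteq> j"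
  unfolding contact_edges_def by blast

lemma edges_x_iff:
  "{i,j} \<in> edges_x n r x y \<longleftrightarrow> {i,j} \<in> contact_edges n r x y \<and> r i + r j = \<bar>x i - x j\<bar> \<and> \<bar>y i - y j\<bar> \<le> \<bar>x i - x j\<bar>"
proof
  assume "{i,j} \<in> edges_x n r x y"
  then obtain i' j' where e: "{i,j} = {i',j'}" "{i',j'} \<in> contact_edges n r x y"
     "r i' + r j' = \<bar>x i' - x j'\<bar>" "\<bar>x i' - x j'\<bar> \<ge> \<bar>y i' - y j'\<bar>"
    unfolding edges_x_def by blast
  from e(1) have "(i = i' \<and> j = j') \<or> (i = j' \<and> j = i')" by (auto simp: doubleton_eq_iff)
  then show "{i,j} \<in> contact_edges n r x y \<and> r i + r j = \<bar>x i - x j\<bar> \<and> \<bar>y i - y j\<bar> \<le> \<bar>x i - x j\<bar>"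
  proof
    assume "i = i' \<and> j = j'" then show ?thesis using e by auto
  next
    assume "i = j' \<and> j = i'"
    moreover have "\<bar>x j - x i\<bar> = \<bar>x i - x j\<bar>" "\<bar>y j - y i\<bar> = \<bar>y i - y j\<bar>" "r j + r i = r i + r j" "{j,i} = {i,j}" by auto
    ultimately show ?thesis using e by auto
  qed
qed (auto simp: edges_x_def)

lemma edges_y_iff:
  "{i,j} \<in> edges_y n r x y \<longleftrightarrow> {i,j} \<in> contact_edges n r x y \<and> r i + r j = \<bar>y i - y j\<bar> \<and> \<bar>x i - x j\<bar> \<le> \<bar>y i - y j\<bar>"
proof
  assume "{i,j} \<in> edges_y n r x y"
  then obtain i' j' where e: "{i,j} = {i',j'}" "{i',j'} \<in> contact_edges n r x y"
     "r i' + r j' = \<bar>y i' - y j'\<bar>" "\<bar>y i' - y j'\<bar> \<ge> \<bar>x i' - x j'\<bar>"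
    unfolding edges_y_def by blast
  from e(1) have "(i = i' \<and> j = j') \<or> (i = j' \<and> j = i')" by (auto simp: doubleton_eq_iff)
  then show "{i,j} \<in> contact_edges n r x y \<and> r i + r j = \<bar>y i - y j\<bar> \<and> \<bar>x i - x j\<bar> \<le> \<bar>y i - y j\<bar>"
  proof
    assume "i = i' \<and> j = j'" then show ?thesis using e by auto
  next
    assume "i = j' \<and> j = i'"
    moreover have "\<bar>x j - x i\<bar> = \<bar>x i - x j\<bar>" "\<bar>y j - y i\<bar> = \<bar>y i - y j\<bar>" "r j + r i = r i + r j" "{j,i} = {i,j}" by auto
    ultimately show ?thesis using e by auto
  qed
qed (auto simp: edges_y_def)

lemma edges_x_sub: "edges_x n r x y \<subseteq> contact_edges n r x y"
  unfolding edges_x_def by auto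
lemma edges_y_sub: "edges_y n r x y \<subseteq> contact_edges n r x y"
  unfolding edges_y_def by auto

lemma sq_swap: "(a,b) \<in> sq r y x i \<longleftrightarrow> (b,a) \<in> sq r x y i"
  by (auto simp: sq_def)

lemma contact_swap: "contact_edges n r y x = contact_edges n r x y"
proof -
  have "sq r y x i \<inter> sq r y x j \<noteq> {} \<longleftrightarrow> sq r x y i \<inter> sq r x y j \<noteq> {}" for i j
  proof
    assume "sq r y x i \<inter> sq r y x j \<noteq> {}"
    then obtain a b where "(a,b) \<in> sq r y x i" "(a,b) \<in> sq r y x j" by auto
    then have "(b,a) \<in> sq r x y i \<inter> sq r x y j" by (simp add: sq_swap)
    then show "sq r x y i \<inter> sq r x y j \<noteq> {}" by blast
  next
    assume "sq r x y i \<inter> sq r x y j \<noteq> {}"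
    then obtain a b where "(a,b) \<in> sq r x y i" "(a,b) \<in> sq r x y j" by auto
    then have "(b,a) \<in> sq r y x i \<inter> sq r y x j" by (simp add: sq_swap)
    then show "sq r y x i \<inter> sq r y x j \<noteq> {}" by blast
  qed
  then show ?thesis unfolding contact_edges_def by simp
qed

lemma edges_x_swap: "edges_x n r y x = edges_y n r x y"
  unfolding edges_x_def edges_y_def by (simp only: contact_swap[of n r x y])

lemma sep_swap: "sep r y x i j = sep r x y i j"
  unfolding sep_def by (rule disj_commute)

lemma packing_swap: "homothetic_packing n r y x \<longleftrightarrow> homothetic_packing n r x y"
  unfolding packing_iff using sep_swap[of r y x] by simp

lemma contact_split:
  assumes "homothetic_packing n r x y"
  shows "contact_edges n r x y \<subseteq> edges_x n r x y \<union> edges_y n r x y"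
proof
  fix e assume e: "e \<in> contact_edges n r x y"
  then obtain i j where ij: "e = {i,j}" "i<n" "j<n" "i\<noteq>j" using contact_edges_form by blast
  have pos: "\<forall>i<n. r i > 0" and s: "sep r x y i j" using assms ij unfolding packing_iff by auto
  have c: "\<bar>x i - x j\<bar> \<le> r i + r j" "\<bar>y i - y j\<bar> \<le> r i + r j" using e ij contact_iff[OF pos] by auto
  show "e \<in> edges_x n r x y \<union> edges_y n r x y"
  proof (cases "\<bar>y i - y j\<bar> \<le> \<bar>x i - x j\<bar>")
    case True
    then have "r i + r j = \<bar>x i - x j\<bar>" using s c by (auto simp: sep_def)
    then show ?thesis using True e ij by (simp add: edges_x_iff)
  next
    case False
    then have "r i + r j = \<bar>y i - y j\<bar>" using s c by (auto simp: sep_def)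
    then show ?thesis using False e ij by (simp add: edges_y_iff)
  qed
qed


lemma wg_sets:
  assumes wg: "weak_generic n r" and PQ: "P \<subseteq> {..<n}" "Q \<subseteq> {..<n}" "P \<inter> Q = {}" "P \<union> Q \<noteq> {}"
    and cardPQ: "card P + card Q + 4 \<le> n" and sums: "(\<Sum>i\<in>P. r i) = (\<Sum>i\<in>Q. r i)"
  shows False
proof -
  define \<sigma> :: "nat \<Rightarrow> int" where "\<sigma> i = (if i \<in> P then 1 else if i \<in> Q then -1 else 0)" for i
  have fin: "finite P" "finite Q" using finite_subset[OF PQ(1)] finite_subset[OF PQ(2)] by auto
  have vals: "\<forall>i<n. \<sigma> i \<in> {-1,0,1}" by (auto simp: \<sigma>_def)
  have "(\<Sum>i<n. of_int (\<sigma> i) * r i) = (\<Sum>i<n. (if i \<in> P then r i else 0)) - (\<Sum>i<n. (if i \<in> Q then r i else 0))"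
    unfolding sum_subtractf[symmetric] using PQ(3) by (intro sum.cong) (auto simp: \<sigma>_def)
  also have "\<dots> = (\<Sum>i\<in>P. r i) - (\<Sum>i\<in>Q. r i)"
    using PQ by (simp add: sum.If_cases Int_absorb1)
  finally have s0: "(\<Sum>i<n. of_int (\<sigma> i) * r i) = 0" using sums by simp
  have "{i. i < n \<and> \<sigma> i = 0} = {..<n} - (P \<union> Q)" by (auto simp: \<sigma>_def)
  moreover have "card ({..<n} - (P \<union> Q)) = n - card (P \<union> Q)"
    using PQ fin by (subst card_Diff_subset) auto
  moreover have "card (P \<union> Q) = card P + card Q" by (rule card_Un_disjoint[OF fin PQ(3)])
  ultimately have "card {i. i < n \<and> \<sigma> i = 0} \<ge> 4" using cardPQ by simp
  then have "\<forall>i<n. \<sigma> i = 0" using wg vals s0 unfolding weak_generic_def by blast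
  moreover obtain i where i: "i \<in> P \<union> Q" using PQ(4) by blast
  moreover have "i < n" using i PQ(1,2) by auto
  moreover have "\<sigma> i \<noteq> 0" using i PQ(3) by (auto simp: \<sigma>_def)
  ultimately show False by blast
qed

definition cw :: "nat list \<Rightarrow> nat \<Rightarrow> nat" where "cw c i = c ! (i mod length c)"

definition eps :: "(nat \<Rightarrow> real) \<Rightarrow> nat list \<Rightarrow> nat \<Rightarrow> int" where
  "eps z c i = (if z (cw c i) < z (cw c (Suc i)) then 1 else -1)"

lemma cw_mod: "cw c (i mod length c) = cw c i"
  by (simp add: cw_def)

lemma cw_add: "cw c (i + length c) = cw c i"
  by (simp add: cw_def)

lemma cw_eq_iff:
  assumes "distinct c" "c \<noteq> []"
  shows "cw c i = cw c j \<longleftrightarrow> i mod length c = j mod length c"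
  using assms by (simp add: cw_def nth_eq_iff_index_eq)

lemma cw_in: "c \<noteq> [] \<Longrightarrow> cw c i \<in> set c"
  by (simp add: cw_def)

lemma eps_mod: "eps z c (i mod length c) = eps z c i"
proof -
  have "cw c (Suc (i mod length c)) = cw c (Suc i)"
    by (simp add: cw_def mod_Suc_eq)
  then show ?thesis by (simp add: eps_def cw_mod)
qed

lemma eps_cong: "i mod length c = j mod length c \<Longrightarrow> eps z c i = eps z c j"
  by (metis eps_mod)

lemma eps_vals: "eps z c i = 1 \<or> eps z c i = -1"
  by (simp add: eps_def)

definition zcyc :: "nat \<Rightarrow> (nat \<Rightarrow> real) \<Rightarrow> (nat \<Rightarrow> real) \<Rightarrow> nat list \<Rightarrow> bool" where
  "zcyc n r z c \<longleftrightarrow> length c \<ge> 3 \<and> distinct c \<and> set c \<subseteq> {..<n} \<and> (\<forall>i<n. r i > 0) \<and>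
     (\<forall>i. \<bar>z (cw c i) - z (cw c (Suc i))\<bar> = r (cw c i) + r (cw c (Suc i)))"

lemma zcycI:
  assumes "is_cycle n Ed c" "\<forall>i<n. r i > 0"
    and "\<And>i j. {i,j} \<in> Ed \<Longrightarrow> \<bar>z i - z j\<bar> = r i + r j"
  shows "zcyc n r z c"
proof -
  have k: "length c \<ge> 3" "distinct c" "set c \<subseteq> {..<n}" using assms(1) by (auto simp: is_cycle_def)
  have "\<bar>z (cw c i) - z (cw c (Suc i))\<bar> = r (cw c i) + r (cw c (Suc i))" for i
  proof -
    let ?j = "i mod length c"
    have "length c > 0" using k by linarith
    then have "?j < length c" by simp
    then have "{c ! ?j, c ! ((?j + 1) mod length c)} \<in> Ed" using assms(1) by (auto simp: is_cycle_def)
    moreover have "(?j + 1) mod length c = Suc i mod length c" by (simp add: mod_Suc_eq)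
    ultimately have "{cw c i, cw c (Suc i)} \<in> Ed" by (simp add: cw_def)
    then show ?thesis using assms(3) by blast
  qed
  then show ?thesis using k assms(2) by (simp add: zcyc_def)
qed

context
  fixes n r z c
  assumes zc: "zcyc n r z c"
begin

lemma zc_len: "length c \<ge> 3" and zc_dist: "distinct c" and zc_set: "set c \<subseteq> {..<n}"
  and zc_pos: "\<And>i. i < n \<Longrightarrow> r i > 0"
  and zc_edge: "\<And>i. \<bar>z (cw c i) - z (cw c (Suc i))\<bar> = r (cw c i) + r (cw c (Suc i))"
  using zc by (auto simp: zcyc_def)

lemma zc_ne: "c \<noteq> []" using zc_len by auto

lemma zc_cw_lt: "cw c i < n" using cw_in[OF zc_ne] zc_set by auto

lemma zc_rpos: "r (cw c i) > 0" using zc_pos zc_cw_lt by auto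

lemma zc_step: "z (cw c (Suc i)) - z (cw c i) = of_int (eps z c i) * (r (cw c i) + r (cw c (Suc i)))"
proof -
  have e: "\<bar>z (cw c i) - z (cw c (Suc i))\<bar> = r (cw c i) + r (cw c (Suc i))" by (rule zc_edge)
  have p: "r (cw c i) + r (cw c (Suc i)) > 0" using zc_rpos[of i] zc_rpos[of "Suc i"] by simp
  show ?thesis using e p by (auto simp: eps_def abs_if split: if_splits)
qed

lemma zc_telescope: "(\<Sum>i<length c. z (cw c (Suc i)) - z (cw c i)) = 0"
  using sum_lessThan_telescope[of "\<lambda>i. z (cw c i)" "length c"] cw_add[of c 0] by simp

lemma zc_both_signs: "\<exists>i<length c. eps z c i = 1" "\<exists>i<length c. eps z c i = -1"
proof -
  have pos: "r (cw c i) + r (cw c (Suc i)) > 0" for i using zc_rpos[of i] zc_rpos[of "Suc i"] by simp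
  show "\<exists>i<length c. eps z c i = 1"
  proof (rule ccontr)
    assume "\<not> ?thesis"
    then have "\<forall>i<length c. eps z c i = -1" using eps_vals by blast
    then have "\<forall>i\<in>{..<length c}. z (cw c (Suc i)) - z (cw c i) < 0"
      using zc_step pos by (metis lessThan_iff mult_minus1 neg_less_0_iff_less of_int_1 of_int_minus)
    then have "(\<Sum>i<length c. z (cw c (Suc i)) - z (cw c i)) < (\<Sum>i<length c. 0)"
      using zc_len by (intro sum_strict_mono) (auto simp: lessThan_empty_iff)
    then show False using zc_telescope by simp
  qed
  show "\<exists>i<length c. eps z c i = -1"
  proof (rule ccontr)
    assume "\<not> ?thesis"
    then have "\<forall>i<length c. eps z c i = 1" using eps_vals by blast
    then have "\<forall>i\<in>{..<length c}. z (cw c (Suc i)) - z (cw c i) > 0"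
      using zc_step pos by (metis lessThan_iff mult_1 of_int_1)
    then have "(\<Sum>i<length c. z (cw c (Suc i)) - z (cw c i)) > (\<Sum>i<length c. 0)"
      using zc_len by (intro sum_strict_mono) (auto simp: lessThan_empty_iff)
    then show False using zc_telescope by simp
  qed
qed

definition dd :: "nat \<Rightarrow> int" where "dd i = (eps z c i + eps z c (i + length c - 1)) div 2"

lemma dd_twice: "2 * dd i = eps z c i + eps z c (i + length c - 1)"
  unfolding dd_def using eps_vals[of z c i] eps_vals[of z c "i + length c - 1"] by auto

definition sig :: "nat \<Rightarrow> int" where "sig v = (\<Sum>i<length c. if cw c i = v then dd i else 0)"

lemma sig_cw: "j < length c \<Longrightarrow> sig (cw c j) = dd j"
proof -
  assume j: "j < length c"
  have "\<And>i. i < length c \<Longrightarrow> cw c i = cw c j \<longleftrightarrow> i = j"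
    using j cw_eq_iff[OF zc_dist zc_ne] by simp
  then have "sig (cw c j) = (\<Sum>i<length c. if i = j then dd i else 0)"
    unfolding sig_def by (intro sum.cong) auto
  then show ?thesis using j by simp
qed

lemma sig_out: "v \<notin> set c \<Longrightarrow> sig v = 0"
  unfolding sig_def using cw_in[OF zc_ne] by (intro sum.neutral) auto

lemma sig_vals: "sig v \<in> {-1, 0, 1}"
proof (cases "v \<in> set c")
  case True
  then obtain j where j: "j < length c" "c ! j = v" by (auto simp: in_set_conv_nth)
  then have "cw c j = v" by (simp add: cw_def)
  then show ?thesis using sig_cw[OF j(1)] dd_twice[of j] eps_vals[of z c j] eps_vals[of z c "j + length c - 1"]
    by auto
qed (simp add: sig_out)

lemma sig_sum: "(\<Sum>v<n. of_int (sig v) * r v) = 0"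
proof -
  let ?k = "length c"
  have "of_int (sig v) * r v = (\<Sum>i<?k. if cw c i = v then of_int (dd i) * r v else 0)" for v
    unfolding sig_def of_int_sum sum_distrib_right by (intro sum.cong) auto
  then have "(\<Sum>v<n. of_int (sig v) * r v) = (\<Sum>v<n. \<Sum>i<?k. if cw c i = v then of_int (dd i) * r v else 0)"
    by simp
  also have "\<dots> = (\<Sum>i<?k. \<Sum>v<n. if cw c i = v then of_int (dd i) * r v else 0)"
    by (rule sum.swap)
  also have "\<dots> = (\<Sum>i<?k. of_int (dd i) * r (cw c i))"
    using zc_cw_lt by (intro sum.cong) (auto simp: sum.delta)
  finally have e1: "(\<Sum>v<n. of_int (sig v) * r v) = (\<Sum>i<?k. of_int (dd i) * r (cw c i))" .
  define g where "g i = of_int (eps z c (i + ?k - 1)) * r (cw c i)" for i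
  have gS: "g (Suc i) = of_int (eps z c i) * r (cw c (Suc i))" for i
  proof -
    have "Suc i + ?k - 1 = i + ?k" using zc_len by simp
    then show ?thesis unfolding g_def using eps_cong[of "i + ?k" c i] by simp
  qed
  have gk: "g ?k = g 0"
  proof -
    have "eps z c (?k + ?k - 1) = eps z c (0 + ?k - 1)"
    proof (rule eps_cong)
      have "?k + ?k - 1 = (?k - 1) + ?k" using zc_len by simp
      then show "(?k + ?k - 1) mod ?k = (0 + ?k - 1) mod ?k" by simp
    qed
    moreover have "cw c ?k = cw c 0" using cw_add[of c 0] by simp
    ultimately show ?thesis unfolding g_def by simp
  qed
  have shift: "(\<Sum>i<?k. g (Suc i)) = (\<Sum>i<?k. g i)"
  proof -
    have "(\<Sum>i<Suc ?k. g i) = g 0 + (\<Sum>i<?k. g (Suc i))" by (rule sum.lessThan_Suc_shift)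
    moreover have "(\<Sum>i<Suc ?k. g i) = (\<Sum>i<?k. g i) + g ?k" by simp
    ultimately show ?thesis using gk by simp
  qed
  have "(\<Sum>i<?k. of_int (eps z c i) * (r (cw c i) + r (cw c (Suc i)))) = 0"
    using zc_telescope zc_step by simp
  then have "(\<Sum>i<?k. of_int (eps z c i) * r (cw c i)) + (\<Sum>i<?k. g (Suc i)) = 0"
    by (simp add: gS distrib_left sum.distrib)
  then have "(\<Sum>i<?k. of_int (eps z c i) * r (cw c i)) + (\<Sum>i<?k. g i) = 0" using shift by simp
  then have "(\<Sum>i<?k. of_int (eps z c i) * r (cw c i) + g i) = 0" by (simp add: sum.distrib)
  moreover have "of_int (eps z c i) * r (cw c i) + g i = 2 * (of_int (dd i) * r (cw c i))" for i
  proof -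
    have h: "(of_int (2 * dd i) :: real) = of_int (eps z c i) + of_int (eps z c (i + ?k - 1))"
      using dd_twice[of i] by (metis of_int_add)
    have "of_int (eps z c i) * r (cw c i) + g i = (of_int (eps z c i) + of_int (eps z c (i + ?k - 1))) * r (cw c i)"
      unfolding g_def by (simp add: distrib_right)
    also have "\<dots> = of_int (2 * dd i) * r (cw c i)" using h by simp
    also have "\<dots> = 2 * (of_int (dd i) * r (cw c i))" by simp
    finally show ?thesis .
  qed
  ultimately have "2 * (\<Sum>i<?k. of_int (dd i) * r (cw c i)) = 0" by (simp add: sum_distrib_left)
  then show ?thesis using e1 by simp
qed

definition chg :: "nat set" where "chg = {i. i < length c \<and> eps z c (i + length c - 1) \<noteq> eps z c i}"

lemma alt_or_few:
  assumes wg: "weak_generic n r"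
  shows "(\<forall>i. eps z c (Suc i) = - eps z c i) \<or> (n - length c) + card chg \<le> 3"
proof (rule disjCI)
  let ?k = "length c"
  assume "\<not> (n - ?k) + card chg \<le> 3"
  then have big: "(n - ?k) + card chg \<ge> 4" by simp
  have sub: "({..<n} - set c) \<union> cw c ` chg \<subseteq> {v. v < n \<and> sig v = 0}"
  proof
    fix v assume "v \<in> ({..<n} - set c) \<union> cw c ` chg"
    then show "v \<in> {v. v < n \<and> sig v = 0}"
    proof
      assume "v \<in> {..<n} - set c" then show ?thesis using sig_out by auto
    next
      assume "v \<in> cw c ` chg"
      then obtain j where j: "j < ?k" "eps z c (j + ?k - 1) \<noteq> eps z c j" "v = cw c j" by (auto simp: chg_def)
      have "dd j = 0" using dd_twice[of j] j(2) eps_vals[of z c j] eps_vals[of z c "j + ?k - 1"] by auto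
      then show ?thesis using sig_cw[OF j(1)] j zc_cw_lt by simp
    qed
  qed
  have injc: "inj_on (cw c) chg"
    using cw_eq_iff[OF zc_dist zc_ne] by (auto simp: inj_on_def chg_def)
  have "card ({..<n} - set c) = n - ?k"
    using zc_set distinct_card[OF zc_dist] by (simp add: card_Diff_subset)
  moreover have "card (cw c ` chg) = card chg" using injc by (simp add: card_image)
  moreover have "({..<n} - set c) \<inter> cw c ` chg = {}" using cw_in[OF zc_ne] by auto
  moreover have "finite (cw c ` chg)" by (simp add: chg_def)
  ultimately have "card (({..<n} - set c) \<union> cw c ` chg) = (n - ?k) + card chg"
    by (simp add: card_Un_disjoint)
  moreover have "card (({..<n} - set c) \<union> cw c ` chg) \<le> card {v. v < n \<and> sig v = 0}"
    by (rule card_mono[OF _ sub]) simp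
  ultimately have "card {v. v < n \<and> sig v = 0} \<ge> 4" using big by linarith
  then have all0: "\<forall>v<n. sig v = 0"
    using wg sig_vals sig_sum unfolding weak_generic_def by blast
  show "\<forall>i. eps z c (Suc i) = - eps z c i"
  proof
    fix i
    define j where "j = Suc i mod ?k"
    have kpos: "?k > 0" using zc_len by linarith
    have j: "j < ?k" unfolding j_def using kpos by simp
    have "cw c j < n" by (rule zc_cw_lt)
    then have "sig (cw c j) = 0" using all0 by blast
    then have "dd j = 0" using sig_cw[OF j] by simp
    then have e1: "eps z c j = - eps z c (j + ?k - 1)" using dd_twice[of j] by simp
    have e2: "eps z c j = eps z c (Suc i)" unfolding j_def by (rule eps_mod)
    have m1: "j + ?k - 1 = j + (?k - 1)" using kpos by linarith
    have m2: "(j + (?k - 1)) mod ?k = (Suc i + (?k - 1)) mod ?k" unfolding j_def by (rule mod_add_left_eq)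
    have m3: "Suc i + (?k - 1) = i + ?k" using kpos by linarith
    have "(j + ?k - 1) mod ?k = i mod ?k" unfolding m1 m2 m3 by simp
    then have e3: "eps z c (j + ?k - 1) = eps z c i" by (rule eps_cong)
    show "eps z c (Suc i) = - eps z c i" using e1 e2 e3 by simp
  qed
qed

end


lemma entry_exists:
  fixes P :: "nat \<Rightarrow> bool" and k :: nat
  assumes k: "k > 0" and per: "\<And>a. P (a mod k) = P a"
    and ex1: "a < k" "P a" and ex2: "b < k" "\<not> P b"
  shows "\<exists>i<k. \<not> P (i + k - 1) \<and> P i"
proof (rule ccontr)
  assume H: "\<not> ?thesis"
  have step: "\<not> P m \<Longrightarrow> \<not> P (Suc m)" for m
  proof -
    assume nm: "\<not> P m"
    define i where "i = Suc m mod k"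
    have i: "i < k" using k by (simp add: i_def)
    have "(i + k - 1) mod k = (i + (k - 1)) mod k" using k by (simp add: algebra_simps)
    also have "\<dots> = (Suc m + (k - 1)) mod k" unfolding i_def by (rule mod_add_left_eq)
    also have "Suc m + (k - 1) = m + k" using k by linarith
    finally have "(i + k - 1) mod k = m mod k" by simp
    then have "P (i + k - 1) = P m" by (metis per)
    then have "\<not> P i" using H i nm by blast
    then show "\<not> P (Suc m)" unfolding i_def using per by metis
  qed
  have "\<not> P (b + d)" for d
    by (induction d) (use ex2 step in auto)
  from this[of "a + k - b"] have "\<not> P (a + k)" using ex2(1) by simp
  then show False using ex1 per[of "a + k"] per[of a] by simp
qed

lemma is_cycle_mono: "is_cycle n Ed c \<Longrightarrow> Ed \<subseteq> Ed' \<Longrightarrow> is_cycle n Ed' c"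
  unfolding is_cycle_def by blast

lemma is_cycle_rotate:
  assumes "is_cycle n Ed c"
  shows "is_cycle n Ed (rotate s c)"
proof -
  let ?k = "length c"
  have k: "?k \<ge> 3" "distinct c" "set c \<subseteq> {..<n}" and ed: "\<forall>i<?k. {c ! i, c ! ((i + 1) mod ?k)} \<in> Ed"
    using assms by (auto simp: is_cycle_def)
  have "{rotate s c ! i, rotate s c ! ((i + 1) mod ?k)} \<in> Ed" if i: "i < ?k" for i
  proof -
    define j where "j = (i + s) mod ?k"
    have kpos: "?k > 0" using k by linarith
    have j: "j < ?k" using kpos by (simp add: j_def)
    have "rotate s c ! i = c ! ((s + i) mod ?k)" using i by (rule nth_rotate)
    then have "rotate s c ! i = c ! j" by (simp add: j_def add.commute)
    moreover have "rotate s c ! ((i + 1) mod ?k) = c ! ((j + 1) mod ?k)"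
    proof -
      have "(i + 1) mod ?k < ?k" using kpos by simp
      then have A: "rotate s c ! ((i + 1) mod ?k) = c ! ((s + (i + 1) mod ?k) mod ?k)" by (rule nth_rotate)
      have B1: "(s + (i + 1) mod ?k) mod ?k = (s + (i + 1)) mod ?k" by (rule mod_add_right_eq)
      have B2: "(j + 1) mod ?k = (i + s + 1) mod ?k" unfolding j_def by (rule mod_add_left_eq)
      have B3: "s + (i + 1) = i + s + 1" by simp
      show ?thesis using A B1 B2 B3 by (simp add: add.commute)
    qed
    ultimately show ?thesis using ed j by simp
  qed
  then show ?thesis using k by (simp add: is_cycle_def)
qed

lemma cw_rotate: "c \<noteq> [] \<Longrightarrow> cw (rotate s c) i = cw c (i + s)"
proof -
  assume c: "c \<noteq> []"
  have "cw (rotate s c) i = rotate s c ! (i mod length c)" by (simp add: cw_def)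
  also have "\<dots> = c ! ((s + i mod length c) mod length c)" using c by (intro nth_rotate) simp
  also have "(s + i mod length c) mod length c = (i + s) mod length c" by (simp add: mod_add_right_eq add.commute)
  finally show ?thesis by (simp add: cw_def)
qed

lemma eps_rotate: "c \<noteq> [] \<Longrightarrow> eps z (rotate s c) i = eps z c (i + s)"
  by (simp add: eps_def cw_rotate)


lemma deg2_cycle:
  assumes fin: "finite W" and ne: "W \<noteq> {}" and Wn: "W \<subseteq> {..<n}"
    and nosing: "\<And>u. {u} \<notin> Ed"
    and deg: "\<And>u. u \<in> W \<Longrightarrow> \<exists>v1 v2. v1 \<noteq> v2 \<and> v1 \<in> W \<and> v2 \<in> W \<and> {u,v1} \<in> Ed \<and> {u,v2} \<in> Ed"
  shows "\<exists>c. is_cycle n Ed c"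
proof -
  define nx where "nx p u = (SOME v. v \<in> W \<and> {u,v} \<in> Ed \<and> v \<noteq> p)" for p u
  have nx: "nx p u \<in> W \<and> {u, nx p u} \<in> Ed \<and> nx p u \<noteq> p" if uW: "u \<in> W" for p u
  proof -
    obtain v1 v2 where v: "v1 \<noteq> v2" "v1 \<in> W" "v2 \<in> W" "{u,v1} \<in> Ed" "{u,v2} \<in> Ed" using deg[OF uW] by blast
    have "\<exists>v. v \<in> W \<and> {u,v} \<in> Ed \<and> v \<noteq> p" using v by metis
    then show ?thesis unfolding nx_def by (rule someI_ex)
  qed
  obtain u0 where u0: "u0 \<in> W" using ne by blast
  obtain v0 where v0: "v0 \<in> W" "{u0,v0} \<in> Ed" using deg[OF u0] by blast
  define wk where "wk = rec_nat (u0, v0) (\<lambda>_ pq. (snd pq, nx (fst pq) (snd pq)))"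
  have wk0: "wk 0 = (u0, v0)" and wkS: "wk (Suc i) = (snd (wk i), nx (fst (wk i)) (snd (wk i)))" for i
    by (simp_all add: wk_def)
  define s where "s i = fst (wk i)" for i
  have inv: "fst (wk i) \<in> W \<and> snd (wk i) \<in> W \<and> {fst (wk i), snd (wk i)} \<in> Ed" for i
  proof (induction i)
    case 0 then show ?case using u0 v0 by (simp add: wk0)
  next
    case (Suc i) then show ?case using nx[of "snd (wk i)" "fst (wk i)"] by (simp add: wkS)
  qed
  have sS: "snd (wk i) = s (Suc i)" for i by (simp add: s_def wkS)
  have sW: "s i \<in> W" for i using inv by (simp add: s_def)
  have sE: "{s i, s (Suc i)} \<in> Ed" for i using inv[of i] by (simp add: s_def sS)
  have sSS: "s (Suc (Suc i)) \<noteq> s i" for i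
  proof -
    have "s (Suc (Suc i)) = nx (s i) (s (Suc i))" by (simp add: s_def wkS sS[symmetric])
    then show ?thesis using nx[OF sW[of "Suc i"], of "s i"] by simp
  qed
  have "\<not> inj_on s {..card W}"
  proof
    assume "inj_on s {..card W}"
    then have "card (s ` {..card W}) = Suc (card W)" by (simp add: card_image)
    moreover have "card (s ` {..card W}) \<le> card W" using sW fin by (intro card_mono) auto
    ultimately show False by simp
  qed
  then obtain a b where ab: "a < b" "s a = s b"
    unfolding inj_on_def by (metis linorder_neqE_nat)
  define j0 where "j0 = (LEAST j. \<exists>i<j. s i = s j)"
  have ex0: "\<exists>i<j0. s i = s j0" unfolding j0_def by (rule LeastI[of _ b]) (use ab in auto)
  then obtain i0 where i0: "i0 < j0" "s i0 = s j0" by blast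
  have minj: "s a' \<noteq> s b'" if "a' < b'" "b' < j0" for a' b'
  proof
    assume "s a' = s b'"
    then have "\<exists>i<b'. s i = s b'" using that by blast
    then have "j0 \<le> b'" unfolding j0_def by (rule Least_le)
    then show False using that by simp
  qed
  define L where "L = j0 - i0"
  define c where "c = map s [i0..<j0]"
  have lenc: "length c = L" by (simp add: c_def L_def)
  have cnth: "c ! l = s (i0 + l)" if "l < L" for l using that by (simp add: c_def L_def)
  have dist: "distinct c" unfolding c_def distinct_map
  proof
    show "inj_on s (set [i0..<j0])"
      unfolding inj_on_def using minj by (metis atLeastLessThan_iff linorder_neqE_nat set_upt)
  qed simp
  have L1: "L \<noteq> 1"
  proof
    assume "L = 1"
    then have "j0 = Suc i0" using i0 by (simp add: L_def)
    then have "{s i0} \<in> Ed" using sE[of i0] i0 by simp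
    then show False using nosing by blast
  qed
  have L2: "L \<noteq> 2"
  proof
    assume "L = 2"
    then have "j0 = Suc (Suc i0)" using i0 by (simp add: L_def)
    then show False using sSS[of i0] i0 by simp
  qed
  have L3: "L \<ge> 3" using L1 L2 i0 by (simp add: L_def)
  have "{c ! l, c ! ((l + 1) mod L)} \<in> Ed" if l: "l < L" for l
  proof (cases "l + 1 < L")
    case True
    then show ?thesis using cnth[OF l] cnth[OF True] sE[of "i0 + l"] by simp
  next
    case False
    then have "l + 1 = L" using l by simp
    then have e: "Suc (i0 + l) = j0" "(l + 1) mod L = 0" using i0 by (simp_all add: L_def)
    have "c ! 0 = s i0" using cnth[of 0] L3 by simp
    then have "c ! ((l + 1) mod L) = s (i0 + l + 1)"
      using e i0 by simp
    then show ?thesis using cnth[OF l] sE[of "i0 + l"] by simp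
  qed
  moreover have "set c \<subseteq> {..<n}" using sW Wn by (auto simp: c_def)
  ultimately have "is_cycle n Ed c" using dist L3 lenc by (simp add: is_cycle_def)
  then show ?thesis by blast
qed

definition edges_in :: "nat set \<Rightarrow> nat set set \<Rightarrow> bool" where
  "edges_in W Ed \<longleftrightarrow> (\<forall>e\<in>Ed. \<exists>u v. e = {u,v} \<and> u \<noteq> v \<and> u \<in> W \<and> v \<in> W)"

lemma forest_card:
  assumes "finite W" "W \<subseteq> {..<n}" "edges_in W Ed" "\<not> (\<exists>c. is_cycle n Ed c)"
  shows "card Ed + 1 \<le> card W \<or> (W = {} \<and> Ed = {})"
  using assms
proof (induction "card W" arbitrary: W Ed rule: less_induct)
  case less
  show ?case
  proof (cases "W = {}")
    case True
    then show ?thesis using less.prems(3) by (auto simp: edges_in_def)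
  next
    case ne: False
    have nosing: "{u} \<notin> Ed" for u
    proof
      assume "{u} \<in> Ed"
      then obtain a b where ab: "{u} = {a,b}" "a \<noteq> b" using less.prems(3) by (auto simp: edges_in_def)
      then have "a \<in> {u}" "b \<in> {u}" by auto
      then show False using ab(2) by simp
    qed
    have "\<not> (\<forall>u\<in>W. \<exists>v1 v2. v1 \<noteq> v2 \<and> v1 \<in> W \<and> v2 \<in> W \<and> {u,v1} \<in> Ed \<and> {u,v2} \<in> Ed)"
    proof
      assume "\<forall>u\<in>W. \<exists>v1 v2. v1 \<noteq> v2 \<and> v1 \<in> W \<and> v2 \<in> W \<and> {u,v1} \<in> Ed \<and> {u,v2} \<in> Ed"
      then have "\<exists>c. is_cycle n Ed c"
        using deg2_cycle[of W n Ed] less.prems(1,2) ne nosing by blast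
      then show False using less.prems(4) by blast
    qed
    then obtain u where u: "u \<in> W" and lowdeg: "\<And>v1 v2. v1 \<in> W \<Longrightarrow> v2 \<in> W \<Longrightarrow> {u,v1} \<in> Ed \<Longrightarrow> {u,v2} \<in> Ed \<Longrightarrow> v1 = v2"
      by blast
    define W' where "W' = W - {u}"
    define Ed' where "Ed' = {e \<in> Ed. u \<notin> e}"
    have finEd: "finite Ed"
    proof -
      have "Ed \<subseteq> Pow W" using less.prems(3) by (auto simp: edges_in_def)
      then show ?thesis using less.prems(1) finite_subset by blast
    qed
    have sub: "Ed' \<subseteq> Ed" by (auto simp: Ed'_def)
    have rest: "card (Ed - Ed') \<le> 1"
    proof -
      have "\<forall>e1\<in>Ed - Ed'. \<forall>e2\<in>Ed - Ed'. e1 = e2"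
      proof (intro ballI)
        fix e1 e2 assume e: "e1 \<in> Ed - Ed'" "e2 \<in> Ed - Ed'"
        then have u1: "u \<in> e1" "e1 \<in> Ed" and u2: "u \<in> e2" "e2 \<in> Ed" by (auto simp: Ed'_def)
        obtain a1 b1 where 1: "e1 = {a1,b1}" "a1 \<in> W" "b1 \<in> W" using u1 less.prems(3) by (auto simp: edges_in_def)
        obtain a2 b2 where 2: "e2 = {a2,b2}" "a2 \<in> W" "b2 \<in> W" using u2 less.prems(3) by (auto simp: edges_in_def)
        obtain v1 where v1: "e1 = {u,v1}" "v1 \<in> W" using 1 u1 by auto
        obtain v2 where v2: "e2 = {u,v2}" "v2 \<in> W" using 2 u2 by auto
        have "v1 = v2" using lowdeg[OF v1(2) v2(2)] v1 v2 u1 u2 by simp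
        then show "e1 = e2" using v1 v2 by simp
      qed
      then show ?thesis using finEd by (simp add: card_le_Suc0_iff_eq)
    qed
    have cardEd: "card Ed \<le> card Ed' + 1"
    proof -
      have "card Ed = card Ed' + card (Ed - Ed')"
        using finEd sub by (metis card_Diff_subset card_mono diff_add_inverse le_add_diff_inverse finite_subset)
      then show ?thesis using rest by simp
    qed
    have W'lt: "card W' < card W" using u less.prems(1) unfolding W'_def by (metis card_Diff1_less)
    have edges_in': "edges_in W' Ed'"
      using less.prems(3) by (fastforce simp: edges_in_def Ed'_def W'_def)
    have acyc': "\<not> (\<exists>c. is_cycle n Ed' c)" using less.prems(4) is_cycle_mono[OF _ sub] by blast
    have IH: "card Ed' + 1 \<le> card W' \<or> (W' = {} \<and> Ed' = {})"
      using less.hyps[OF W'lt _ _ edges_in' acyc'] less.prems(1,2) by (auto simp: W'_def)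
    show ?thesis
    proof (cases "W' = {}")
      case True
      then have "W = {u}" using u by (auto simp: W'_def)
      then have "Ed = {}" using less.prems(3) by (auto simp: edges_in_def)
      then show ?thesis using u less.prems(1) by (simp add: card_gt_0_iff Suc_leI ne)
    next
      case False
      then have "card Ed' + 1 \<le> card W'" using IH by blast
      moreover have "card W' = card W - 1" using u less.prems(1) by (simp add: W'_def)
      moreover have "card W > 0" using u less.prems(1) card_gt_0_iff by blast
      ultimately show ?thesis using cardEd by linarith
    qed
  qed
qed


lemma cyc_edge: "is_cycle n Ed c \<Longrightarrow> {cw c i, cw c (Suc i)} \<in> Ed"
proof -
  assume cy: "is_cycle n Ed c"
  let ?j = "i mod length c"
  have "length c > 0" using cy by (auto simp: is_cycle_def)
  then have "?j < length c" by simp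
  then have "{c ! ?j, c ! ((?j + 1) mod length c)} \<in> Ed" using cy by (auto simp: is_cycle_def)
  moreover have "(?j + 1) mod length c = Suc i mod length c" by (simp add: mod_Suc_eq)
  ultimately show "{cw c i, cw c (Suc i)} \<in> Ed" by (simp add: cw_def)
qed

lemma pos_of_packing: "homothetic_packing n r x y \<Longrightarrow> i < n \<Longrightarrow> r i > 0"
  by (simp add: packing_iff)

lemma sep_of_packing: "homothetic_packing n r x y \<Longrightarrow> i < n \<Longrightarrow> j < n \<Longrightarrow> i \<noteq> j \<Longrightarrow>
   r i + r j \<le> \<bar>x i - x j\<bar> \<or> r i + r j \<le> \<bar>y i - y j\<bar>"
  by (simp add: packing_iff sep_def)

lemma zcyc_x:
  assumes "homothetic_packing n r x y" "is_cycle n (edges_x n r x y) c"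
  shows "zcyc n r x c"
  by (rule zcycI[OF assms(2)]) (use assms(1) in \<open>auto simp: packing_iff edges_x_iff\<close>)

lemma zcyc_y:
  assumes "homothetic_packing n r x y" "is_cycle n Ed c" "Ed \<subseteq> edges_y n r x y"
  shows "zcyc n r y c"
  by (rule zcycI[OF assms(2)]) (use assms(1,3) in \<open>auto simp: packing_iff edges_y_iff\<close>)

lemma len_le_n: "is_cycle n Ed c \<Longrightarrow> length c \<le> n"
proof -
  assume "is_cycle n Ed c"
  then have "distinct c" "set c \<subseteq> {..<n}" by (auto simp: is_cycle_def)
  then show ?thesis by (metis card_lessThan card_mono distinct_card finite_lessThan)
qed

locale two =
  fixes n :: nat and r x y :: "nat \<Rightarrow> real" and c :: "nat list" and t :: nat
  assumes pack: "homothetic_packing n r x y"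
    and wg: "weak_generic n r"
    and cyc: "is_cycle n (edges_x n r x y) c"
    and big: "n \<le> length c + 1"
    and n5: "5 \<le> n"
    and t1: "1 \<le> t" and tk: "t < length c"
    and plus: "\<And>i. i < t \<Longrightarrow> eps x c i = 1"
    and minus: "\<And>i. t \<le> i \<Longrightarrow> i < length c \<Longrightarrow> eps x c i = -1"
begin

abbreviation k where "k \<equiv> length c"
abbreviation w where "w \<equiv> cw c"

lemma zc: "zcyc n r x c" by (rule zcyc_x[OF pack cyc])

lemma k3: "k \<ge> 3" using zc_len[OF zc] .
lemma kn: "k \<le> n" using len_le_n[OF cyc] .
lemma wlt: "w i < n" using zc_cw_lt[OF zc] .
lemma rw: "r (w i) > 0" using zc_rpos[OF zc] .
lemma winj: "i < k \<Longrightarrow> j < k \<Longrightarrow> w i = w j \<Longrightarrow> i = j"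
  using cw_eq_iff[OF zc_dist[OF zc] zc_ne[OF zc]] by simp
lemma wk: "w k = w 0" using cw_add[of c 0] by simp

lemma stepP: "i < t \<Longrightarrow> x (w (Suc i)) - r (w (Suc i)) = x (w i) + r (w i)"
  using zc_step[OF zc, of i] plus[of i] by simp

lemma stepM: "t \<le> i \<Longrightarrow> i < k \<Longrightarrow> x (w (Suc i)) + r (w (Suc i)) = x (w i) - r (w i)"
  using zc_step[OF zc, of i] minus[of i] by simp

definition A where "A = x (w 0) + r (w 0)"
definition F where "F m = (\<Sum>l\<in>{1..m}. r (w l))"
definition G where "G m = (\<Sum>l\<in>{k-m..<k}. r (w l))"
definition p where "p = t - 1"
definition q where "q = k - t - 1"

lemma F0: "F 0 = 0" by (simp add: F_def)
lemma G0: "G 0 = 0" by (simp add: G_def)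
lemma FS: "F (Suc m) = F m + r (w (Suc m))" by (simp add: F_def)
lemma GS: "Suc m \<le> k \<Longrightarrow> G (Suc m) = G m + r (w (k - Suc m))"
proof -
  assume m: "Suc m \<le> k"
  have "{k - Suc m..<k} = insert (k - Suc m) {k - m..<k}" using m by auto
  moreover have "k - Suc m \<notin> {k - m..<k}" using m by auto
  ultimately show ?thesis by (simp add: G_def)
qed

lemma F_mono: "i < j \<Longrightarrow> F i < F j"
proof (induction j)
  case 0 then show ?case by simp
next
  case (Suc j)
  have "F j < F (Suc j)" using FS[of j] rw[of "Suc j"] by simp
  then show ?case using Suc by (cases "i = j") auto
qed

lemma G_mono: "i < j \<Longrightarrow> j \<le> k \<Longrightarrow> G i < G j"
proof (induction j)
  case 0 then show ?case by simp
next
  case (Suc j)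
  have "G j < G (Suc j)" using GS[of j] rw[of "k - Suc j"] Suc.prems by simp
  then show ?case using Suc by (cases "i = j") auto
qed

lemma F_le: "i \<le> j \<Longrightarrow> F i \<le> F j" using F_mono by (cases "i = j") (auto intro: less_imp_le)
lemma G_le: "i \<le> j \<Longrightarrow> j \<le> k \<Longrightarrow> G i \<le> G j" using G_mono by (cases "i = j") (auto intro: less_imp_le)
lemma F_inj: "F i = F j \<Longrightarrow> i = j" using F_mono by (metis less_irrefl linorder_neqE_nat)
lemma G_inj: "G i = G j \<Longrightarrow> i \<le> k \<Longrightarrow> j \<le> k \<Longrightarrow> i = j" using G_mono by (metis less_irrefl linorder_neqE_nat)
lemma F_pos: "i > 0 \<Longrightarrow> F i > 0" using F_mono[of 0 i] F0 by simp
lemma G_pos: "i > 0 \<Longrightarrow> i \<le> k \<Longrightarrow> G i > 0" using G_mono[of 0 i] G0 by simp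

lemma aF: "1 \<le> l \<Longrightarrow> l \<le> t \<Longrightarrow> x (w l) - r (w l) = A + 2 * F (l - 1)"
proof -
  have "Suc d \<le> t \<Longrightarrow> x (w (Suc d)) - r (w (Suc d)) = A + 2 * F d" for d
  proof (induction d)
    case 0 then show ?case using stepP[of 0] by (simp add: A_def F0)
  next
    case (Suc d)
    have "x (w (Suc (Suc d))) - r (w (Suc (Suc d))) = x (w (Suc d)) + r (w (Suc d))"
      using stepP[of "Suc d"] Suc.prems by simp
    also have "\<dots> = A + 2 * F d + 2 * r (w (Suc d))" using Suc by simp
    finally show ?case by (simp add: FS)
  qed
  then show "1 \<le> l \<Longrightarrow> l \<le> t \<Longrightarrow> x (w l) - r (w l) = A + 2 * F (l - 1)"
    by (metis Suc_diff_1 le_less_trans less_one not_le)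
qed

lemma aG: "1 \<le> m \<Longrightarrow> m \<le> k - t \<Longrightarrow> x (w (k - m)) - r (w (k - m)) = A + 2 * G (m - 1)"
proof -
  have "Suc d \<le> k - t \<Longrightarrow> x (w (k - Suc d)) - r (w (k - Suc d)) = A + 2 * G d" for d
  proof (induction d)
    case 0
    have tt: "t \<le> k - 1" "k - 1 < k" using tk by auto
    have sk: "Suc (k - 1) = k" using tk by simp
    from stepM[OF tt] have "x (w k) + r (w k) = x (w (k - 1)) - r (w (k - 1))"
      unfolding sk .
    then show ?case using wk by (simp add: A_def G0)
  next
    case (Suc d)
    let ?i = "k - Suc (Suc d)"
    have i: "t \<le> ?i" "?i < k" using Suc.prems by auto
    have si: "Suc ?i = k - Suc d" using Suc.prems by auto
    have "x (w ?i) - r (w ?i) = x (w (k - Suc d)) + r (w (k - Suc d))"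
      using stepM[OF i] si by simp
    also have "\<dots> = A + 2 * G d + 2 * r (w (k - Suc d))" using Suc by simp
    finally show ?case using GS[of d] Suc.prems by simp
  qed
  then show "1 \<le> m \<Longrightarrow> m \<le> k - t \<Longrightarrow> x (w (k - m)) - r (w (k - m)) = A + 2 * G (m - 1)"
    by (metis Suc_diff_1 le_less_trans less_one not_le)
qed

lemma FG: "F p = G q"
proof -
  have "x (w t) - r (w t) = A + 2 * F (t - 1)" using aF[of t] t1 by simp
  moreover have "x (w (k - (k - t))) - r (w (k - (k - t))) = A + 2 * G (k - t - 1)"
    using aG[of "k - t"] tk by simp
  moreover have "k - (k - t) = t" using tk by simp
  ultimately show ?thesis by (simp add: p_def q_def)
qed

lemma pq: "p \<ge> 1" "q \<ge> 1" "p + q + 2 = k" "q \<le> k"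
proof -
  show pqk: "p + q + 2 = k" using t1 tk k3 unfolding p_def q_def
  proof -
    have "q \<noteq> 0 \<or> p \<noteq> 0 \<or> k \<ge> 3" using k3 by simp
    show "t - 1 + (k - t - 1) + 2 = k"
    proof (cases "t = k - 1")
      case True
      then have "q = 0" unfolding q_def using True by simp
      then have "F p = 0" using FG G0 by simp
      then have "p = 0" using F_pos by (metis less_irrefl not_gr0)
      then show ?thesis using True k3 t1 by (simp add: p_def)
    qed (use t1 tk in auto)
  qed
  show "q \<le> k" unfolding q_def by simp
  show "p \<ge> 1"
  proof (rule ccontr)
    assume "\<not> p \<ge> 1"
    then have "p = 0" by simp
    then have "G q = 0" using FG F0 by simp
    then have "q = 0" using G_pos[of q] pqk by (metis le_add2 le_add_same_cancel2 less_irrefl not_gr0 trans_le_add1)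
    then show False using pqk k3 \<open>p = 0\<close> by simp
  qed
  show "q \<ge> 1"
  proof (rule ccontr)
    assume "\<not> q \<ge> 1"
    then have "q = 0" by simp
    then have "F p = 0" using FG G0 by simp
    then have "p = 0" using F_pos by (metis less_irrefl not_gr0)
    then show False using pqk k3 \<open>q = 0\<close> by simp
  qed
qed

lemma t_eq: "t = p + 1" using t1 by (simp add: p_def)
lemma kq: "k - q = t + 1" using pq t_eq by simp

lemma sum_img: "S \<subseteq> {..<k} \<Longrightarrow> (\<Sum>v\<in>w ` S. r v) = (\<Sum>l\<in>S. r (w l))"
  by (rule sum.reindex_cong[of w]) (auto simp: inj_on_def dest: winj)

lemma card_img: "S \<subseteq> {..<k} \<Longrightarrow> card (w ` S) = card S"
  by (rule card_image) (auto simp: inj_on_def dest: winj)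

lemma img_disj: "S1 \<subseteq> {..<k} \<Longrightarrow> S2 \<subseteq> {..<k} \<Longrightarrow> S1 \<inter> S2 = {} \<Longrightarrow> w ` S1 \<inter> w ` S2 = {}"
  by (auto dest: winj)

lemma img_lt: "w ` S \<subseteq> {..<n}" using wlt by auto

lemma no_cross_mid: "F i = G j \<Longrightarrow> 0 < i \<Longrightarrow> i < p \<Longrightarrow> 0 < j \<Longrightarrow> j < q \<Longrightarrow> False"
proof -
  assume e: "F i = G j" and ij: "0 < i" "i < p" "0 < j" "j < q"
  have kk: "p + q + 2 = k" using pq by simp
  define P1 where "P1 = {1..i}"
  define Q1 where "Q1 = {k-j..<k}"
  define P2 where "P2 = {Suc i..p}"
  define Q2 where "Q2 = {k-q..<k-j}"
  have subs: "P1 \<subseteq> {..<k}" "Q1 \<subseteq> {..<k}" "P2 \<subseteq> {..<k}" "Q2 \<subseteq> {..<k}"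
    using ij kk by (auto simp: P1_def Q1_def P2_def Q2_def)
  have d1: "P1 \<inter> Q1 = {}" "P2 \<inter> Q2 = {}" using ij kk by (auto simp: P1_def Q1_def P2_def Q2_def)
  have c1: "card P1 = i" "card Q1 = j" "card P2 = p - i" "card Q2 = q - j"
    using ij kk by (auto simp: P1_def Q1_def P2_def Q2_def)
  have s1: "(\<Sum>l\<in>P1. r (w l)) = (\<Sum>l\<in>Q1. r (w l))" using e by (simp add: P1_def Q1_def F_def G_def)
  have "F p = F i + (\<Sum>l\<in>P2. r (w l))"
  proof -
    have e1: "{1..p} = {1..i} \<union> P2" "{1..i} \<inter> P2 = {}" using ij by (auto simp: P2_def)
    have "(\<Sum>l\<in>{1..p}. r (w l)) = (\<Sum>l\<in>{1..i} \<union> P2. r (w l))" by (simp only: e1(1))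
    also have "\<dots> = (\<Sum>l\<in>{1..i}. r (w l)) + (\<Sum>l\<in>P2. r (w l))"
      by (rule sum.union_disjoint) (use e1(2) in \<open>auto simp: P2_def\<close>)
    finally show ?thesis unfolding F_def .
  qed
  moreover have "G q = G j + (\<Sum>l\<in>Q2. r (w l))"
  proof -
    have e1: "{k-q..<k} = {k-j..<k} \<union> Q2" "{k-j..<k} \<inter> Q2 = {}" using ij kk by (auto simp: Q2_def)
    have "(\<Sum>l\<in>{k-q..<k}. r (w l)) = (\<Sum>l\<in>{k-j..<k} \<union> Q2. r (w l))" by (simp only: e1(1))
    also have "\<dots> = (\<Sum>l\<in>{k-j..<k}. r (w l)) + (\<Sum>l\<in>Q2. r (w l))"
      by (rule sum.union_disjoint) (use e1(2) in \<open>auto simp: Q2_def\<close>)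
    finally show ?thesis unfolding G_def .
  qed
  ultimately have s2: "(\<Sum>l\<in>P2. r (w l)) = (\<Sum>l\<in>Q2. r (w l))" using e FG by simp
  have ne1: "w ` P1 \<union> w ` Q1 \<noteq> {}" using ij by (auto simp: P1_def)
  have ne2: "w ` P2 \<union> w ` Q2 \<noteq> {}" using ij by (auto simp: P2_def)
  have "\<not> (card (w ` P1) + card (w ` Q1) + 4 \<le> n)"
  proof
    assume "card (w ` P1) + card (w ` Q1) + 4 \<le> n"
    then show False
      using wg_sets[OF wg img_lt img_lt img_disj[OF subs(1,2) d1(1)] ne1] s1 sum_img[OF subs(1)] sum_img[OF subs(2)]
      by simp
  qed
  moreover have "\<not> (card (w ` P2) + card (w ` Q2) + 4 \<le> n)"
  proof
    assume "card (w ` P2) + card (w ` Q2) + 4 \<le> n"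
    then show False
      using wg_sets[OF wg img_lt img_lt img_disj[OF subs(3,4) d1(2)] ne2] s2 sum_img[OF subs(3)] sum_img[OF subs(4)]
      by simp
  qed
  ultimately have "i + j + 4 > n" "(p - i) + (q - j) + 4 > n"
    using c1 card_img[OF subs(1)] card_img[OF subs(2)] card_img[OF subs(3)] card_img[OF subs(4)] by simp_all
  then show False using kk kn n5 ij by linarith
qed

lemma no_cross: "F i = G j \<Longrightarrow> i \<le> p \<Longrightarrow> j \<le> q \<Longrightarrow> (i = 0 \<and> j = 0) \<or> (i = p \<and> j = q)"
proof -
  assume e: "F i = G j" and ij: "i \<le> p" "j \<le> q"
  have kk: "p + q + 2 = k" using pq by simp
  show ?thesis
  proof (cases "i = 0")
    case True
    then have "G j = 0" using e F0 by simp
    then have "j = 0" using G_pos[of j] ij kk by (metis le_add2 le_trans less_irrefl not_gr0 trans_le_add1)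
    then show ?thesis using True by simp
  next
    case i0: False
    show ?thesis
    proof (cases "i = p")
      case True
      then have "G j = G q" using e FG by simp
      then have "j = q" using G_inj kk ij by simp
      then show ?thesis using True by simp
    next
      case ip: False
      show ?thesis
      proof (cases "j = 0")
        case True
        then have "F i = 0" using e G0 by simp
        then show ?thesis using F_pos[of i] i0 by simp
      next
        case j0: False
        show ?thesis
        proof (cases "j = q")
          case True
          then have "F i = F p" using e FG by simp
          then show ?thesis using F_inj ip by simp
        next
          case False
          then show ?thesis using no_cross_mid[OF e] i0 ip j0 ij by simp
        qed
      qed
    qed
  qed
qed

end


lemma chg_ge2:
  assumes zc: "zcyc n r z c"
  shows "2 \<le> card (chg z c)"
proof -
  let ?k = "length c"
  have kpos: "?k > 0" using zc_len[OF zc] by linarith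
  obtain a1 where a1: "a1 < ?k" "eps z c a1 = 1" using zc_both_signs[OF zc] by blast
  obtain a2 where a2: "a2 < ?k" "eps z c a2 = -1" using zc_both_signs[OF zc] by blast
  have per1: "(eps z c (a mod ?k) = 1) = (eps z c a = 1)" for a by (simp add: eps_mod)
  have per2: "(eps z c (a mod ?k) = -1) = (eps z c a = -1)" for a by (simp add: eps_mod)
  obtain i1 where i1: "i1 < ?k" "\<not> eps z c (i1 + ?k - 1) = 1" "eps z c i1 = 1"
    using entry_exists[of ?k "\<lambda>i. eps z c i = 1", OF kpos per1 a1 a2(1)] a2(2) by auto
  obtain i2 where i2: "i2 < ?k" "\<not> eps z c (i2 + ?k - 1) = -1" "eps z c i2 = -1"
    using entry_exists[of ?k "\<lambda>i. eps z c i = -1", OF kpos per2 a2 a1(1)] a1(2) by auto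
  have "i1 \<in> chg z c" unfolding chg_def[OF zc] using i1 by auto
  have "i2 \<in> chg z c" unfolding chg_def[OF zc] using i2 by auto
  have "i1 \<noteq> i2" using i1 i2 by auto
  moreover have "finite (chg z c)" by (simp add: chg_def[OF zc])
  ultimately have "card {i1, i2} \<le> card (chg z c)" using \<open>i1 \<in> chg z c\<close> \<open>i2 \<in> chg z c\<close> by (intro card_mono) auto
  then show ?thesis using \<open>i1 \<noteq> i2\<close> by simp
qed

lemma cyc_two_nbrs:
  assumes cy: "is_cycle n Ed c" and v: "v \<in> set c"
  shows "\<exists>u1 u2. u1 \<noteq> u2 \<and> {v, u1} \<in> Ed \<and> {v, u2} \<in> Ed \<and> u1 \<in> set c \<and> u2 \<in> set c"
proof -
  let ?L = "length c"
  have L: "?L \<ge> 3" "distinct c" and ed: "\<And>i. i < ?L \<Longrightarrow> {c ! i, c ! ((i + 1) mod ?L)} \<in> Ed"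
    using cy by (auto simp: is_cycle_def)
  obtain i where i: "i < ?L" "c ! i = v" using v by (auto simp: in_set_conv_nth)
  define i1 where "i1 = (i + 1) mod ?L"
  define i2 where "i2 = (i + ?L - 1) mod ?L"
  have Lpos: "?L > 0" using L by linarith
  have i1L: "i1 < ?L" and i2L: "i2 < ?L" using Lpos by (auto simp: i1_def i2_def)
  have e1: "{v, c ! i1} \<in> Ed" using ed[OF i(1)] i by (simp add: i1_def)
  have "(i2 + 1) mod ?L = i"
  proof -
    have "(i2 + 1) mod ?L = (i + ?L - 1 + 1) mod ?L" unfolding i2_def by (simp add: mod_Suc_eq)
    also have "i + ?L - 1 + 1 = i + ?L" using L by simp
    finally show ?thesis using i by simp
  qed
  then have e2: "{c ! i2, v} \<in> Ed" using ed[OF i2L] i by simp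
  have "i1 \<noteq> i2"
  proof (cases "i + 1 < ?L")
    case True
    then have a: "i1 = i + 1" by (simp add: i1_def)
    show ?thesis
    proof (cases "i = 0")
      case True
      then have "i2 = (?L - 1) mod ?L" by (simp add: i2_def)
      also have "\<dots> = ?L - 1" using Lpos by simp
      finally show ?thesis using a True L by simp
    next
      case False
      have eq: "i + ?L - 1 = (i - 1) + ?L" using False by linarith
      have "i2 = ((i - 1) + ?L) mod ?L" by (simp only: i2_def eq)
      also have "\<dots> = (i - 1) mod ?L" by (rule mod_add_self2)
      also have "\<dots> = i - 1" using i by simp
      finally show ?thesis using a by simp
    qed
  next
    case False
    then have iL: "i = ?L - 1" using i by simp
    then have "i + 1 = ?L" using Lpos by simp
    then have "i1 = 0" by (simp add: i1_def)
    moreover have "i2 = ?L - 2"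
    proof -
      have eq: "i + ?L - 1 = (?L - 2) + ?L" using iL L by linarith
      have "i2 = ((?L - 2) + ?L) mod ?L" by (simp only: i2_def eq)
      also have "\<dots> = (?L - 2) mod ?L" by (rule mod_add_self2)
      also have "\<dots> = ?L - 2" using L by simp
      finally show ?thesis .
    qed
    ultimately show ?thesis using L by simp
  qed
  then have "c ! i1 \<noteq> c ! i2" using L(2) i1L i2L by (simp add: nth_eq_iff_index_eq)
  moreover have "{v, c ! i2} \<in> Ed" using e2 by (simp add: insert_commute)
  ultimately show ?thesis using e1 i1L i2L by (metis nth_mem)
qed

lemma alt_H:
  assumes pack: "homothetic_packing n r x y" and zc: "zcyc n r y c"
    and alt: "\<And>i. eps y c (Suc i) = - eps y c i"
    and ov: "\<And>i. \<bar>x (cw c i) - x (cw c (Suc i))\<bar> < r (cw c i) + r (cw c (Suc i))"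
  shows False
proof -
  let ?k = "length c"
  let ?w = "cw c"
  have kpos: "?k > 0" using zc_len[OF zc] by linarith
  define M where "M = Max ((\<lambda>i. x (?w i) - r (?w i)) ` {..<?k})"
  have "M \<in> (\<lambda>i. x (?w i) - r (?w i)) ` {..<?k}" unfolding M_def using kpos by (intro Max_in) auto
  then obtain m where m: "m < ?k" "x (?w m) - r (?w m) = M" by auto
  have le: "x (?w i) - r (?w i) \<le> M" for i
  proof -
    have "x (?w (i mod ?k)) - r (?w (i mod ?k)) \<le> M" unfolding M_def using kpos by (intro Max_ge) auto
    then show ?thesis by (simp add: cw_mod)
  qed
  define u where "u = ?w (m + ?k - 1)"
  define v where "v = ?w (Suc m)"
  have um: "?w (Suc (m + ?k - 1)) = ?w m"
  proof -
    have "Suc (m + ?k - 1) = m + ?k" using kpos by simp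
    then show ?thesis using cw_add[of c m] by simp
  qed
  have uv: "u \<noteq> v"
  proof
    assume "u = v"
    then have e0: "(m + ?k - 1) mod ?k = Suc m mod ?k"
      using cw_eq_iff[OF zc_dist[OF zc] zc_ne[OF zc]] by (simp add: u_def v_def)
    have "m + ?k - 1 = Suc m + (?k - 2)" using zc_len[OF zc] by simp
    then have e: "(Suc m) mod ?k = (Suc m + (?k - 2)) mod ?k" using e0 by simp
    have "?k dvd (Suc m + (?k - 2)) - Suc m" using e mod_eq_dvd_iff_nat[of "Suc m" "Suc m + (?k - 2)" ?k] by simp
    then have "?k dvd (?k - 2)" by simp
    moreover have "?k - 2 > 0" "?k - 2 < ?k" using zc_len[OF zc] by auto
    ultimately show False by (meson dvd_imp_le not_le)
  qed
  have s1: "y v - y (?w m) = of_int (eps y c m) * (r (?w m) + r v)"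
    using zc_step[OF zc, of m] by (simp add: v_def)
  have s2: "y (?w m) - y u = of_int (eps y c (m + ?k - 1)) * (r u + r (?w m))"
    using zc_step[OF zc, of "m + ?k - 1"] um by (simp add: u_def)
  have "eps y c (Suc (m + ?k - 1)) = eps y c m"
  proof -
    have "Suc (m + ?k - 1) = m + ?k" using kpos by simp
    then show ?thesis by (metis eps_cong mod_add_self2)
  qed
  then have ee: "eps y c (m + ?k - 1) = - eps y c m" using alt[of "m + ?k - 1"] by simp
  have yy: "\<bar>y v - y u\<bar> = \<bar>r v - r u\<bar>"
  proof -
    have "y v - y u = of_int (eps y c m) * (r v - r u)" using s1 s2 ee by (simp add: algebra_simps)
    then show ?thesis using eps_vals[of y c m] by (auto simp: abs_mult)
  qed
  have ru: "r u > 0" "r v > 0" using zc_rpos[OF zc] by (auto simp: u_def v_def)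
  have "u < n" "v < n" using zc_cw_lt[OF zc] by (auto simp: u_def v_def)
  then have sp: "r v + r u \<le> \<bar>x v - x u\<bar> \<or> r v + r u \<le> \<bar>y v - y u\<bar>"
    using sep_of_packing[OF pack] uv by metis
  have "\<bar>y v - y u\<bar> < r v + r u" using yy ru by (simp add: abs_if)
  then have xx: "r v + r u \<le> \<bar>x v - x u\<bar>" using sp by linarith
  have o1: "\<bar>x (?w m) - x v\<bar> < r (?w m) + r v" using ov[of m] by (simp add: v_def)
  have o2: "\<bar>x u - x (?w m)\<bar> < r u + r (?w m)" using ov[of "m + ?k - 1"] um by (simp add: u_def)
  have l1: "x v - r v \<le> M" "x u - r u \<le> M" using le by (auto simp: u_def v_def)
  have "x v - x u < r v + r u" "x u - x v < r u + r v"
    using o1 o2 l1 m(2) unfolding abs_less_iff by linarith+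
  then show False using xx unfolding abs_le_iff by linarith
qed

context two
begin

abbreviation aa where "aa v \<equiv> x v - r v"
abbreviation bb where "bb v \<equiv> x v + r v"

lemma rpos: "v < n \<Longrightarrow> r v > 0" using pos_of_packing[OF pack] .

lemma Fnn: "F i \<ge> 0" using F_le[of 0 i] F0 by simp
lemma Gnn: "i \<le> k \<Longrightarrow> G i \<ge> 0" using G_le[of 0 i] G0 by simp

lemma a0: "aa (w 0) < A" using rw[of 0] by (simp add: A_def)
lemma b0: "bb (w 0) = A" by (simp add: A_def)

lemma aG': "t + 1 \<le> l \<Longrightarrow> l < k \<Longrightarrow> aa (w l) = A + 2 * G (k - l - 1)"
proof -
  assume l: "t + 1 \<le> l" "l < k"
  have "aa (w (k - (k - l))) = A + 2 * G (k - l - 1)" using aG[of "k - l"] l by simp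
  moreover have "k - (k - l) = l" using l by simp
  ultimately show ?thesis by simp
qed

lemma bF: "1 \<le> l \<Longrightarrow> l \<le> p \<Longrightarrow> bb (w l) = A + 2 * F l"
proof -
  assume l: "1 \<le> l" "l \<le> p"
  have "aa (w l) = A + 2 * F (l - 1)" using aF[of l] l t_eq by simp
  moreover have "F l = F (l - 1) + r (w l)" using FS[of "l - 1"] l by simp
  ultimately show ?thesis by simp
qed

lemma bG: "t + 1 \<le> l \<Longrightarrow> l < k \<Longrightarrow> bb (w l) = A + 2 * G (k - l)"
proof -
  assume l: "t + 1 \<le> l" "l < k"
  have "G (Suc (k - l - 1)) = G (k - l - 1) + r (w (k - Suc (k - l - 1)))" using GS[of "k - l - 1"] l by simp
  moreover have "Suc (k - l - 1) = k - l" "k - Suc (k - l - 1) = l" using l by auto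
  ultimately have "G (k - l) = G (k - l - 1) + r (w l)" by simp
  then show ?thesis using aG'[OF l] by simp
qed

lemma at: "aa (w t) = A + 2 * F p" using aF[of t] t1 by (simp add: p_def)
lemma bt: "bb (w t) > A + 2 * F p" using at rw[of t] by simp

lemma pos_cases: "l < k \<Longrightarrow> l = 0 \<or> (1 \<le> l \<and> l \<le> p) \<or> l = t \<or> (t + 1 \<le> l \<and> l < k)"
  using t_eq by auto

lemma GqFp: "G q = F p" using FG by simp

lemma a_ge: "l < k \<Longrightarrow> l \<noteq> 0 \<Longrightarrow> aa (w l) \<ge> A"
proof -
  assume l: "l < k" "l \<noteq> 0"
  then consider "1 \<le> l \<and> l \<le> t" | "t + 1 \<le> l \<and> l < k" by linarith
  then show ?thesis
  proof cases
    case 1 then show ?thesis using aF[of l] Fnn by simp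
  next
    case 2 then show ?thesis using aG'[of l] Gnn[of "k - l - 1"] by simp
  qed
qed

lemma a_le: "l < k \<Longrightarrow> aa (w l) \<le> A + 2 * F p"
proof -
  assume l: "l < k"
  then consider "l = 0" | "1 \<le> l \<and> l \<le> t" | "t + 1 \<le> l \<and> l < k" by linarith
  then show ?thesis
  proof cases
    case 1 then show ?thesis using a0 Fnn[of p] by simp
  next
    case 2
    then have "l - 1 \<le> p" using t_eq by linarith
    then show ?thesis using aF[of l] F_le[of "l - 1" p] 2 by simp
  next
    case 3
    have "G (k - l - 1) \<le> G q" using 3 pq by (intro G_le) (auto simp: q_def)
    then show ?thesis using aG'[of l] 3 GqFp by simp
  qed
qed

lemma a_eq_t: "l < k \<Longrightarrow> aa (w l) = A + 2 * F p \<Longrightarrow> l = t"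
proof (rule ccontr)
  assume l: "l < k" "aa (w l) = A + 2 * F p" "l \<noteq> t"
  then consider "l = 0" | "1 \<le> l \<and> l \<le> p" | "t + 1 \<le> l \<and> l < k" using t_eq by linarith
  then show False
  proof cases
    case 1 then show ?thesis using a0 Fnn[of p] l by simp
  next
    case 2
    then have "l - 1 < p" using t_eq by linarith
    then show ?thesis using aF[of l] F_mono[of "l - 1" p] t_eq l 2 by simp
  next
    case 3
    have "G (k - l - 1) < G q" using 3 pq by (intro G_mono) (auto simp: q_def)
    then show ?thesis using aG'[of l] 3 GqFp l by simp
  qed
qed

lemma b_ge: "l < k \<Longrightarrow> bb (w l) \<ge> A"
proof -
  assume l: "l < k"
  then consider "l = 0" | "1 \<le> l \<and> l \<le> p" | "l = t" | "t + 1 \<le> l \<and> l < k" using t_eq by linarith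
  then show ?thesis
  proof cases
    case 1 then show ?thesis using b0 by simp
  next
    case 2 then show ?thesis using bF[of l] Fnn by simp
  next
    case 3 then show ?thesis using bt Fnn[of p] by simp
  next
    case 4 then show ?thesis using bG[of l] Gnn[of "k - l"] by simp
  qed
qed

lemma b_le: "l < k \<Longrightarrow> l \<noteq> t \<Longrightarrow> bb (w l) \<le> A + 2 * F p"
proof -
  assume l: "l < k" "l \<noteq> t"
  then consider "l = 0" | "1 \<le> l \<and> l \<le> p" | "t + 1 \<le> l \<and> l < k" using t_eq by linarith
  then show ?thesis
  proof cases
    case 1 then show ?thesis using b0 Fnn by simp
  next
    case 2 then show ?thesis using bF[of l] F_le[of l p] by simp
  next
    case 3
    have "G (k - l) \<le> G q" using 3 pq by (intro G_le) (auto simp: q_def)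
    then show ?thesis using bG[of l] 3 GqFp by simp
  qed
qed

lemma b_eq_0: "l < k \<Longrightarrow> bb (w l) = A \<Longrightarrow> l = 0"
proof (rule ccontr)
  assume l: "l < k" "bb (w l) = A" "l \<noteq> 0"
  then consider "1 \<le> l \<and> l \<le> p" | "l = t" | "t + 1 \<le> l \<and> l < k" using t_eq by linarith
  then show False
  proof cases
    case 1 then show ?thesis using bF[of l] F_pos[of l] l by simp
  next
    case 2 then show ?thesis using bt Fnn[of p] l by simp
  next
    case 3 then show ?thesis using bG[of l] G_pos[of "k - l"] l by simp
  qed
qed

end


context two
begin

lemma setc: "v \<in> set c \<longleftrightarrow> (\<exists>l<k. v = w l)"
proof
  assume "v \<in> set c"
  then obtain l where "l < k" "c ! l = v" by (auto simp: in_set_conv_nth)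
  then show "\<exists>l<k. v = w l" by (auto simp: cw_def)
next
  assume "\<exists>l<k. v = w l"
  then show "v \<in> set c" using cw_in[OF zc_ne[OF zc]] by auto
qed

lemma BA:
  assumes l: "l < k" and l': "l' < k" and e: "bb (w l) = aa (w l')"
  shows "\<exists>j<k. {w l, w l'} = {w j, w (Suc j)}"
proof -
  have lt: "l \<noteq> t"
  proof
    assume "l = t" then show False using bt a_le[OF l'] e by simp
  qed
  have l'0: "l' \<noteq> 0"
  proof
    assume "l' = 0" then show False using a0 b_ge[OF l] e by simp
  qed
  have kk: "p + q + 2 = k" "t = p + 1" using pq t_eq by auto
  consider (z) "l = 0" | (f) "1 \<le> l" "l \<le> p" | (g) "t + 1 \<le> l" "l < k" using l lt kk by linarith
  then show ?thesis
  proof cases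
    case z
    then have eA: "aa (w l') = A" using e b0 by simp
    consider (fa) "1 \<le> l'" "l' \<le> t" | (ga) "t + 1 \<le> l'" "l' < k" using l' l'0 by linarith
    then show ?thesis
    proof cases
      case fa
      then have "F (l' - 1) = F 0" using aF[of l'] eA F0 by simp
      then have "l' = 1" using F_inj fa by fastforce
      moreover have "0 < k" using k3 by linarith
      ultimately show ?thesis using z by (intro exI[of _ 0]) simp
    next
      case ga
      then have "G (k - l' - 1) = G 0" using aG'[of l'] eA G0 by simp
      then have "k - l' - 1 = 0" using G_inj[of "k - l' - 1" 0] by simp
      then have "l' = k - 1" using ga by simp
      moreover have "Suc (k - 1) = k" using k3 by linarith
      then have "w (Suc (k - 1)) = w 0" using wk by simp
      ultimately show ?thesis using z k3 by (intro exI[of _ "k - 1"]) auto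
    qed
  next
    case f
    then have eF: "aa (w l') = A + 2 * F l" using e bF by simp
    consider (fa) "1 \<le> l'" "l' \<le> t" | (ga) "t + 1 \<le> l'" "l' < k" using l' l'0 by linarith
    then show ?thesis
    proof cases
      case fa
      then have "F (l' - 1) = F l" using aF[of l'] eF by simp
      then have "l' = Suc l" using F_inj fa by fastforce
      then show ?thesis using f kk by (intro exI[of _ l]) auto
    next
      case ga
      then have "F l = G (k - l' - 1)" using aG'[of l'] eF by simp
      moreover have "k - l' - 1 \<le> q" using ga kk by (simp add: q_def)
      ultimately have "(l = 0 \<and> k - l' - 1 = 0) \<or> (l = p \<and> k - l' - 1 = q)" using no_cross[of l "k - l' - 1"] f by simp
      then show ?thesis using f ga kk by (auto simp: q_def)
    qed
  next
    case g
    then have eG: "aa (w l') = A + 2 * G (k - l)" using e bG by simp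
    consider (fa) "1 \<le> l'" "l' \<le> t" | (ga) "t + 1 \<le> l'" "l' < k" using l' l'0 by linarith
    then show ?thesis
    proof cases
      case fa
      then have "F (l' - 1) = G (k - l)" using aF[of l'] eG by simp
      moreover have "l' - 1 \<le> p" "k - l \<le> q" using fa g kk by (auto simp: q_def)
      ultimately have "(l' - 1 = 0 \<and> k - l = 0) \<or> (l' - 1 = p \<and> k - l = q)" using no_cross[of "l' - 1" "k - l"] by simp
      then have "l' = t" "l = t + 1" using g fa kk by (auto simp: q_def)
      then show ?thesis using tk by (intro exI[of _ t]) auto
    next
      case ga
      then have "G (k - l' - 1) = G (k - l)" using aG'[of l'] eG by simp
      then have "k - l' - 1 = k - l" using G_inj ga g by simp
      then have "l = Suc l'" using ga g by simp
      then show ?thesis using ga by (intro exI[of _ l']) (auto simp: insert_commute)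
    qed
  qed
qed

lemma bb_pair1:
  assumes l: "l < k" and l': "l' < k" and ll: "l < l'" and e: "bb (w l) = bb (w l')"
  shows "l = p \<and> l' = t + 1"
proof -
  have kk: "p + q + 2 = k" "t = p + 1" using pq t_eq by auto
  have l0: "l \<noteq> 0"
  proof
    assume "l = 0" then have "bb (w l') = A" using e b0 by simp
    then show False using b_eq_0[OF l'] ll \<open>l = 0\<close> by simp
  qed
  have lt: "l \<noteq> t"
  proof
    assume "l = t" then show False using bt b_le[OF l'] e ll by simp
  qed
  have l't: "l' \<noteq> t"
  proof
    assume "l' = t" then show False using bt b_le[OF l] e ll by simp
  qed
  consider (f) "1 \<le> l" "l \<le> p" | (g) "t + 1 \<le> l" "l < k" using l l0 lt kk by linarith
  then show ?thesis
  proof cases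
    case f
    consider (ff) "1 \<le> l'" "l' \<le> p" | (gg) "t + 1 \<le> l'" "l' < k" using l' ll l't kk f by linarith
    then show ?thesis
    proof cases
      case ff
      then have "F l = F l'" using bF f e by simp
      then show ?thesis using F_inj[of l l'] ll by simp
    next
      case gg
      then have "F l = G (k - l')" using bF[of l] bG[of l'] f e by simp
      moreover have "k - l' \<le> q" using gg kk by (simp add: q_def)
      ultimately have "(l = 0 \<and> k - l' = 0) \<or> (l = p \<and> k - l' = q)" using no_cross[of l "k - l'"] f by simp
      then show ?thesis using f gg kk by (auto simp: q_def)
    qed
  next
    case g
    then have gg: "t + 1 \<le> l'" "l' < k" using ll l' by auto
    then have "G (k - l) = G (k - l')" using bG[of l] bG[of l'] g e by simp
    then show ?thesis using G_inj[of "k - l" "k - l'"] g gg ll by simp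
  qed
qed

lemma aa_pair1:
  assumes l: "l < k" and l': "l' < k" and ll: "l < l'" and e: "aa (w l) = aa (w l')"
  shows "l = 1 \<and> l' = k - 1"
proof -
  have kk: "p + q + 2 = k" "t = p + 1" using pq t_eq by auto
  have l0: "l \<noteq> 0"
  proof
    assume "l = 0" then show False using a0 a_ge[OF l'] e ll by simp
  qed
  consider (f) "1 \<le> l" "l \<le> t" | (g) "t + 1 \<le> l" "l < k" using l l0 kk by linarith
  then show ?thesis
  proof cases
    case f
    consider (ff) "1 \<le> l'" "l' \<le> t" | (gg) "t + 1 \<le> l'" "l' < k" using l' ll kk f by linarith
    then show ?thesis
    proof cases
      case ff
      then have "F (l - 1) = F (l' - 1)" using aF[of l] aF[of l'] f e by simp
      then have "l - 1 = l' - 1" using F_inj by blast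
      then show ?thesis using f ff ll by simp
    next
      case gg
      then have "F (l - 1) = G (k - l' - 1)" using aF[of l] aG'[of l'] f e by simp
      moreover have "k - l' - 1 \<le> q" "l - 1 \<le> p" using gg f kk by (auto simp: q_def)
      ultimately have "(l - 1 = 0 \<and> k - l' - 1 = 0) \<or> (l - 1 = p \<and> k - l' - 1 = q)" using no_cross[of "l - 1" "k - l' - 1"] by simp
      then show ?thesis using f gg kk by (auto simp: q_def)
    qed
  next
    case g
    then have gg: "t + 1 \<le> l'" "l' < k" using ll l' by auto
    then have "G (k - l - 1) = G (k - l' - 1)" using aG'[of l] aG'[of l'] g e by simp
    then show ?thesis using G_inj[of "k - l - 1" "k - l' - 1"] g gg ll by simp
  qed
qed

definition Hs where "Hs = edges_y n r x y - edges_x n r x y"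

lemma H_prop:
  assumes "{u,v} \<in> Hs"
  shows "u < n \<and> v < n \<and> u \<noteq> v \<and> \<bar>x u - x v\<bar> < r u + r v \<and> r u + r v = \<bar>y u - y v\<bar>"
proof -
  have ey: "{u,v} \<in> edges_y n r x y" and nx: "{u,v} \<notin> edges_x n r x y" using assms by (auto simp: Hs_def)
  have ct: "{u,v} \<in> contact_edges n r x y" "r u + r v = \<bar>y u - y v\<bar>" "\<bar>x u - x v\<bar> \<le> \<bar>y u - y v\<bar>"
    using ey by (auto simp: edges_y_iff)
  have posr: "\<forall>i<n. r i > 0" using rpos by blast
  have b: "u < n" "v < n" "u \<noteq> v" using ct(1) contact_iff[OF posr] by auto
  have "\<bar>x u - x v\<bar> \<noteq> r u + r v"
  proof
    assume "\<bar>x u - x v\<bar> = r u + r v"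
    then have "{u,v} \<in> edges_x n r x y" using ct by (simp add: edges_x_iff)
    then show False using nx by simp
  qed
  then show ?thesis using ct b by simp
qed

lemma H_form: "e \<in> Hs \<Longrightarrow> \<exists>u v. e = {u,v} \<and> u < n \<and> v < n \<and> u \<noteq> v"
  unfolding Hs_def using edges_y_sub contact_edges_form by blast

lemma H_sub_y: "Hs \<subseteq> edges_y n r x y" by (auto simp: Hs_def)

lemma H0: "{w 0, v} \<in> Hs \<Longrightarrow> v \<notin> set c"
proof
  assume h: "{w 0, v} \<in> Hs" and v: "v \<in> set c"
  then obtain l where l: "l < k" "v = w l" using setc by blast
  have hp: "\<bar>x (w 0) - x v\<bar> < r (w 0) + r v" "w 0 \<noteq> v" using H_prop[OF h] by auto
  have "l \<noteq> 0"
  proof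
    assume "l = 0" then show False using hp(2) l(2) by simp
  qed
  then have "aa (w l) \<ge> A" using a_ge l by simp
  then show False using hp l by (simp add: A_def abs_less_iff)
qed

lemma Ht: "{w t, v} \<in> Hs \<Longrightarrow> v \<notin> set c"
proof
  assume h: "{w t, v} \<in> Hs" and v: "v \<in> set c"
  then obtain l where l: "l < k" "v = w l" using setc by blast
  have hp: "\<bar>x (w t) - x v\<bar> < r (w t) + r v" "w t \<noteq> v" using H_prop[OF h] by auto
  have "l \<noteq> t"
  proof
    assume "l = t" then show False using hp(2) l(2) by simp
  qed
  then have "bb (w l) \<le> A + 2 * F p" using b_le l by simp
  then show False using hp l at by (simp add: abs_less_iff)
qed

lemma outside_card: "card ({..<n} - set c) = n - k"
  using zc_set[OF zc] distinct_card[OF zc_dist[OF zc]] by (simp add: card_Diff_subset)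

lemma H_avoid0: "w 0 \<notin> set c2" if cy2: "is_cycle n Hs c2"
proof
  assume "w 0 \<in> set c2"
  then obtain u1 u2 where u: "u1 \<noteq> u2" "{w 0, u1} \<in> Hs" "{w 0, u2} \<in> Hs"
    using cyc_two_nbrs[OF cy2] by blast
  have "u1 \<in> {..<n} - set c" "u2 \<in> {..<n} - set c" using u H0 H_prop by auto
  then have "card {u1, u2} \<le> card ({..<n} - set c)" by (intro card_mono) auto
  then show False using u(1) outside_card big by simp
qed

lemma H_avoidt: "w t \<notin> set c2" if cy2: "is_cycle n Hs c2"
proof
  assume "w t \<in> set c2"
  then obtain u1 u2 where u: "u1 \<noteq> u2" "{w t, u1} \<in> Hs" "{w t, u2} \<in> Hs"
    using cyc_two_nbrs[OF cy2] by blast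
  have "u1 \<in> {..<n} - set c" "u2 \<in> {..<n} - set c" using u Ht H_prop by auto
  then have "card {u1, u2} \<le> card ({..<n} - set c)" by (intro card_mono) auto
  then show False using u(1) outside_card big by simp
qed

lemma w0t: "w 0 \<noteq> w t"
proof
  assume "w 0 = w t"
  then have "0 = t" using winj[of 0 t] tk zc_ne[OF zc] by simp
  then show False using t1 by simp
qed

lemma H_acyc: "\<not> is_cycle n Hs c2"
proof
  assume cy2: "is_cycle n Hs c2"
  have s: "set c2 \<subseteq> {..<n} - {w 0, w t}"
    using H_avoid0[OF cy2] H_avoidt[OF cy2] cy2 by (auto simp: is_cycle_def)
  have "length c2 = card (set c2)" using cy2 by (simp add: is_cycle_def distinct_card)
  also have "\<dots> \<le> card ({..<n} - {w 0, w t})" using s by (intro card_mono) auto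
  also have "\<dots> = n - 2" using w0t wlt by (simp add: card_Diff_subset)
  finally have len: "length c2 \<le> n - 2" .
  have zc2: "zcyc n r y c2" by (rule zcyc_y[OF pack cy2 H_sub_y])
  show False
  proof (cases "\<forall>i. eps y c2 (Suc i) = - eps y c2 i")
    case True
    have "\<bar>x (cw c2 i) - x (cw c2 (Suc i))\<bar> < r (cw c2 i) + r (cw c2 (Suc i))" for i
      using H_prop[OF cyc_edge[OF cy2, of i]] by simp
    then show False using alt_H[OF pack zc2] True by blast
  next
    case False
    then have "n - length c2 + card (chg y c2) \<le> 3" using alt_or_few[OF zc2 wg] by blast
    then show False using chg_ge2[OF zc2] len n5 by linarith
  qed
qed

lemma H_bound:
  assumes S: "S \<subseteq> {..<n}" "card S < n" and H': "H' \<subseteq> Hs" and av: "\<And>e. e \<in> H' \<Longrightarrow> e \<inter> S = {}"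
  shows "card H' + 1 \<le> n - card S"
proof -
  let ?W = "{..<n} - S"
  have cW: "card ?W = n - card S" using S by (simp add: card_Diff_subset finite_subset)
  have ei: "edges_in ?W H'"
    unfolding edges_in_def
  proof
    fix e assume e: "e \<in> H'"
    then obtain u v where "e = {u,v}" "u < n" "v < n" "u \<noteq> v" using H_form H' by blast
    then show "\<exists>u v. e = {u, v} \<and> u \<noteq> v \<and> u \<in> ?W \<and> v \<in> ?W" using av[OF e] by blast
  qed
  have ac: "\<not> (\<exists>c. is_cycle n H' c)" using H_acyc is_cycle_mono[OF _ H'] by blast
  have "card H' + 1 \<le> card ?W \<or> (?W = {} \<and> H' = {})"
    by (rule forest_card[OF _ _ ei ac]) auto
  moreover have "?W \<noteq> {}"
  proof
    assume "?W = {}"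
    then have "card ?W = 0" by simp
    then show False using cW S(2) by linarith
  qed
  ultimately show ?thesis using cW by simp
qed

end


lemma abs_touch:
  fixes a b ra rb :: real
  assumes "ra + rb = \<bar>a - b\<bar>"
  shows "a + ra = b - rb \<or> b + rb = a - ra"
proof (cases "a \<le> b")
  case True
  then have "\<bar>a - b\<bar> = b - a" by simp
  then show ?thesis using assms by simp
next
  case False
  then have "\<bar>a - b\<bar> = a - b" by simp
  then show ?thesis using assms by simp
qed

context two
begin

definition CE where "CE = (\<lambda>j. {w j, w (Suc j)}) ` {..<k}"

lemma CE_card: "card CE \<le> k"
  unfolding CE_def by (metis card_image_le card_lessThan finite_lessThan)

lemma finite_CE: "finite CE" unfolding CE_def by simp

lemma Ex_cycle:
  assumes e: "{u,v} \<in> edges_x n r x y" and u: "u \<in> set c" and v: "v \<in> set c"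
  shows "{u,v} \<in> CE"
proof -
  obtain l where l: "l < k" "u = w l" using u setc by blast
  obtain l' where l': "l' < k" "v = w l'" using v setc by blast
  have "r u + r v = \<bar>x u - x v\<bar>" using e by (simp add: edges_x_iff)
  then have "bb u = aa v \<or> bb v = aa u" by (rule abs_touch)
  then show ?thesis
  proof
    assume "bb u = aa v"
    then obtain j where "j < k" "{w l, w l'} = {w j, w (Suc j)}" using BA[OF l(1) l'(1)] l l' by blast
    then show ?thesis using l l' unfolding CE_def by blast
  next
    assume "bb v = aa u"
    then obtain j where "j < k" "{w l', w l} = {w j, w (Suc j)}" using BA[OF l'(1) l(1)] l l' by blast
    then show ?thesis using l l' unfolding CE_def by (auto simp: insert_commute)
  qed
qed

lemma E_pow: "contact_edges n r x y \<subseteq> Pow {..<n}"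
proof
  fix e assume "e \<in> contact_edges n r x y"
  then obtain i j where "e = {i,j}" "i < n" "j < n" using contact_edges_form by blast
  then show "e \<in> Pow {..<n}" by auto
qed

lemma finite_E: "finite (contact_edges n r x y)"
  by (rule finite_subset[OF E_pow]) simp

lemma finite_Ex: "finite (edges_x n r x y)"
  by (rule finite_subset[OF edges_x_sub finite_E])

lemma finite_Hs: "finite Hs"
  by (rule finite_subset[OF _ finite_E]) (use edges_y_sub H_sub_y in blast)

lemma E_le: "card (contact_edges n r x y) \<le> card (edges_x n r x y) + card Hs"
proof -
  have "contact_edges n r x y \<subseteq> edges_x n r x y \<union> Hs"
    using contact_split[OF pack] unfolding Hs_def by blast
  then have "card (contact_edges n r x y) \<le> card (edges_x n r x y \<union> Hs)"
    using finite_Ex finite_Hs by (intro card_mono) simp_all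
  also have "\<dots> \<le> card (edges_x n r x y) + card Hs" by (rule card_Un_le)
  finally show ?thesis .
qed

lemma H0_edge: "e \<in> Hs \<Longrightarrow> w 0 \<in> e \<Longrightarrow> \<exists>v. e = {w 0, v} \<and> v < n \<and> v \<notin> set c"
proof -
  assume e: "e \<in> Hs" "w 0 \<in> e"
  obtain u v where uv: "e = {u,v}" "u < n" "v < n" "u \<noteq> v" using H_form[OF e(1)] by blast
  show ?thesis
  proof (cases "u = w 0")
    case True then show ?thesis using uv e H0 by blast
  next
    case False
    then have "v = w 0" using uv e by auto
    then have "e = {w 0, u}" using uv by auto
    then show ?thesis using e H0 uv by blast
  qed
qed

lemma Ht_edge: "e \<in> Hs \<Longrightarrow> w t \<in> e \<Longrightarrow> \<exists>v. e = {w t, v} \<and> v < n \<and> v \<notin> set c"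
proof -
  assume e: "e \<in> Hs" "w t \<in> e"
  obtain u v where uv: "e = {u,v}" "u < n" "v < n" "u \<noteq> v" using H_form[OF e(1)] by blast
  show ?thesis
  proof (cases "u = w t")
    case True then show ?thesis using uv e Ht by blast
  next
    case False
    then have "v = w t" using uv e by auto
    then have "e = {w t, u}" using uv by auto
    then show ?thesis using e Ht uv by blast
  qed
qed

lemma count_full:
  assumes kn': "k = n"
  shows "card (contact_edges n r x y) \<le> 2 * n - 2"
proof -
  have cs: "card (set c) = card {..<n}" using distinct_card[OF zc_dist[OF zc]] kn' by simp
  have setn: "set c = {..<n}" by (rule card_subset_eq[OF _ zc_set[OF zc] cs]) simp
  have sub: "edges_x n r x y \<subseteq> CE"
  proof
    fix e assume e: "e \<in> edges_x n r x y"
    then obtain u v where uv: "e = {u,v}" "u < n" "v < n" using edges_x_sub contact_edges_form by blast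
    then have "u \<in> set c" "v \<in> set c" using setn by auto
    then show "e \<in> CE" using Ex_cycle e uv(1) by blast
  qed
  have cx: "card (edges_x n r x y) \<le> n"
    using card_mono[OF finite_CE sub] CE_card kn' by linarith
  have av: "e \<inter> {w 0, w t} = {}" if e: "e \<in> Hs" for e
  proof -
    have "w 0 \<notin> e"
    proof
      assume "w 0 \<in> e"
      then obtain v where "v < n" "v \<notin> set c" using H0_edge[OF e] by blast
      then show False using setn by blast
    qed
    moreover have "w t \<notin> e"
    proof
      assume "w t \<in> e"
      then obtain v where "v < n" "v \<notin> set c" using Ht_edge[OF e] by blast
      then show False using setn by blast
    qed
    ultimately show ?thesis by blast
  qed
  have cs2: "card {w 0, w t} = 2" using w0t by simp
  have s1: "{w 0, w t} \<subseteq> {..<n}" using wlt by simp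
  have s2: "card {w 0, w t} < n" using cs2 n5 by simp
  have "card Hs + 1 \<le> n - card {w 0, w t}"
    using H_bound[OF s1 s2 order_refl av] by blast
  then have "card Hs + 3 \<le> n" using cs2 n5 by simp
  then show ?thesis using E_le cx by linarith
qed

end

locale twoX = two +
  fixes X :: nat
  assumes kX: "length c + 1 = n" and Xout: "{..<n} - set c = {X}"
begin

lemma Xn: "X < n" and Xc: "X \<notin> set c" using Xout by auto
lemma notc: "v < n \<Longrightarrow> v \<notin> set c \<Longrightarrow> v = X" using Xout by auto
lemma rX: "r X > 0" using rpos Xn by simp

definition N where "N = {v \<in> set c. {X, v} \<in> edges_x n r x y}"
definition Lf where "Lf = {v \<in> set c. bb v = aa X}"
definition Rt where "Rt = {v \<in> set c. aa v = bb X}"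

lemma finite_N: "finite N" and finite_Lf: "finite Lf" and finite_Rt: "finite Rt"
  by (auto simp: N_def Lf_def Rt_def)

lemma Ex_sub: "edges_x n r x y \<subseteq> CE \<union> (\<lambda>v. {X, v}) ` N"
proof
  fix e assume e: "e \<in> edges_x n r x y"
  then obtain u v where uv: "e = {u,v}" "u < n" "v < n" "u \<noteq> v" using edges_x_sub contact_edges_form by blast
  show "e \<in> CE \<union> (\<lambda>v. {X, v}) ` N"
  proof (cases "u \<in> set c \<and> v \<in> set c")
    case True then show ?thesis using Ex_cycle e uv by auto
  next
    case False
    then show ?thesis
    proof (cases "u \<in> set c")
      case True
      then have "v = X" using False notc uv by auto
      then have "e = {X, u}" "u \<in> N" using uv e True by (auto simp: N_def insert_commute)
      then show ?thesis by blast
    next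
      case False
      then have "u = X" using notc uv by auto
      then have "v \<in> set c" using uv notc by auto
      then have "e = {X, v}" "v \<in> N" using uv e \<open>u = X\<close> by (auto simp: N_def)
      then show ?thesis by blast
    qed
  qed
qed

lemma Ex_card: "card (edges_x n r x y) \<le> k + card N"
proof -
  have "card (edges_x n r x y) \<le> card (CE \<union> (\<lambda>v. {X, v}) ` N)"
    using Ex_sub finite_CE finite_N by (intro card_mono) auto
  also have "\<dots> \<le> card CE + card ((\<lambda>v. {X, v}) ` N)" by (rule card_Un_le)
  also have "\<dots> \<le> k + card N" using CE_card card_image_le[OF finite_N] by (intro add_mono) auto
  finally show ?thesis .
qed

lemma N_sub: "N \<subseteq> Lf \<union> Rt"
proof
  fix v assume v: "v \<in> N"
  then have "r X + r v = \<bar>x X - x v\<bar>" "v \<in> set c" by (auto simp: N_def edges_x_iff)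
  then have "bb X = aa v \<or> bb v = aa X" by (intro abs_touch) simp
  then show "v \<in> Lf \<union> Rt" using \<open>v \<in> set c\<close> by (auto simp: Lf_def Rt_def)
qed

lemma Lf2:
  assumes "v1 \<in> Lf" "v2 \<in> Lf" "v1 \<noteq> v2"
  shows "v1 \<in> {w p, w (t + 1)} \<and> v2 \<in> {w p, w (t + 1)} \<and> aa X = A + 2 * F p"
proof -
  obtain l1 where l1: "l1 < k" "v1 = w l1" using assms(1) setc by (auto simp: Lf_def)
  obtain l2 where l2: "l2 < k" "v2 = w l2" using assms(2) setc by (auto simp: Lf_def)
  have e: "bb (w l1) = bb (w l2)" using assms l1 l2 by (simp add: Lf_def)
  have "l1 \<noteq> l2" using assms(3) l1 l2 by auto
  then have "(l1 = p \<and> l2 = t + 1) \<or> (l2 = p \<and> l1 = t + 1)"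
    using bb_pair1[OF l1(1) l2(1) _ e] bb_pair1[OF l2(1) l1(1) _ e[symmetric]] by (metis linorder_neqE_nat)
  moreover have "bb (w p) = A + 2 * F p" using bF[of p] pq by simp
  ultimately show ?thesis using assms l1 l2 by (auto simp: Lf_def)
qed

lemma Rt2:
  assumes "v1 \<in> Rt" "v2 \<in> Rt" "v1 \<noteq> v2"
  shows "v1 \<in> {w 1, w (k - 1)} \<and> v2 \<in> {w 1, w (k - 1)} \<and> bb X = A"
proof -
  obtain l1 where l1: "l1 < k" "v1 = w l1" using assms(1) setc by (auto simp: Rt_def)
  obtain l2 where l2: "l2 < k" "v2 = w l2" using assms(2) setc by (auto simp: Rt_def)
  have e: "aa (w l1) = aa (w l2)" using assms l1 l2 by (simp add: Rt_def)
  have "l1 \<noteq> l2" using assms(3) l1 l2 by auto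
  then have "(l1 = 1 \<and> l2 = k - 1) \<or> (l2 = 1 \<and> l1 = k - 1)"
    using aa_pair1[OF l1(1) l2(1) _ e] aa_pair1[OF l2(1) l1(1) _ e[symmetric]] by (metis linorder_neqE_nat)
  moreover have "aa (w 1) = A" using aF[of 1] t1 F0 by simp
  ultimately show ?thesis using assms l1 l2 by (auto simp: Rt_def)
qed

lemma Lf_empty: "aa X < A \<Longrightarrow> Lf = {}"
proof -
  assume a: "aa X < A"
  have "v \<notin> Lf" for v
  proof
    assume v: "v \<in> Lf"
    then obtain l where "l < k" "v = w l" using setc by (auto simp: Lf_def)
    then show False using b_ge[of l] v a by (auto simp: Lf_def)
  qed
  then show ?thesis by blast
qed

lemma Rt_empty: "bb X > A + 2 * F p \<Longrightarrow> Rt = {}"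
proof -
  assume a: "bb X > A + 2 * F p"
  have "v \<notin> Rt" for v
  proof
    assume v: "v \<in> Rt"
    then obtain l where "l < k" "v = w l" using setc by (auto simp: Rt_def)
    then show False using a_le[of l] v a by (auto simp: Rt_def)
  qed
  then show ?thesis by blast
qed

lemma card_le1: "finite S \<Longrightarrow> \<not> (\<exists>v1\<in>S. \<exists>v2\<in>S. v1 \<noteq> v2) \<Longrightarrow> card S \<le> 1"
  using card_le_Suc0_iff_eq by fastforce

lemma N_card: "card N \<le> 2"
proof -
  have "card (Lf \<union> Rt) \<le> 2"
  proof (cases "\<exists>v1\<in>Lf. \<exists>v2\<in>Lf. v1 \<noteq> v2")
    case True
    then obtain v1 v2 where v: "v1 \<in> Lf" "v2 \<in> Lf" "v1 \<noteq> v2" by blast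
    then have "aa X = A + 2 * F p" using Lf2 by blast
    then have "Rt = {}" using Rt_empty rX by simp
    moreover have "Lf \<subseteq> {w p, w (t + 1)}"
    proof
      fix v assume v': "v \<in> Lf"
      show "v \<in> {w p, w (t + 1)}"
      proof (cases "v = v1")
        case True then show ?thesis using Lf2[OF v] by blast
      next
        case False then show ?thesis using Lf2[OF v' v(1)] by blast
      qed
    qed
    ultimately have "card (Lf \<union> Rt) \<le> card {w p, w (t + 1)}" by (intro card_mono) auto
    also have "\<dots> \<le> 2" by (cases "w p = w (t + 1)") auto
    finally show ?thesis .
  next
    case nL: False
    show ?thesis
    proof (cases "\<exists>v1\<in>Rt. \<exists>v2\<in>Rt. v1 \<noteq> v2")
      case True
      then obtain v1 v2 where v: "v1 \<in> Rt" "v2 \<in> Rt" "v1 \<noteq> v2" by blast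
      then have "bb X = A" using Rt2 by blast
      then have "Lf = {}" using Lf_empty rX by simp
      moreover have "Rt \<subseteq> {w 1, w (k - 1)}"
      proof
        fix v assume v': "v \<in> Rt"
        show "v \<in> {w 1, w (k - 1)}"
        proof (cases "v = v1")
          case True then show ?thesis using Rt2[OF v] by blast
        next
          case False then show ?thesis using Rt2[OF v' v(1)] by blast
        qed
      qed
      ultimately have "card (Lf \<union> Rt) \<le> card {w 1, w (k - 1)}" by (intro card_mono) auto
      also have "\<dots> \<le> 2" by (cases "w 1 = w (k - 1)") auto
      finally show ?thesis .
    next
      case False
      have "card Lf \<le> 1" using card_le1[OF finite_Lf] nL by blast
      moreover have "card Rt \<le> 1" using card_le1[OF finite_Rt] False by blast
      ultimately show ?thesis using card_Un_le[of Lf Rt] by linarith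
    qed
  qed
  then show ?thesis using card_mono[OF _ N_sub] finite_Lf finite_Rt by (meson finite_UnI le_trans)
qed

end


context twoX
begin

definition h0 where "h0 = {w 0, X}"
definition ht where "ht = {w t, X}"

lemma w0c: "w 0 \<in> set c" and wtc: "w t \<in> set c" using cw_in[OF zc_ne[OF zc]] by auto

lemma Hs0: "e \<in> Hs \<Longrightarrow> w 0 \<in> e \<Longrightarrow> e = h0"
  using H0_edge notc unfolding h0_def by blast

lemma Hst: "e \<in> Hs \<Longrightarrow> w t \<in> e \<Longrightarrow> e = ht"
  using Ht_edge notc unfolding ht_def by blast

lemma h0_aX: "h0 \<in> Hs \<Longrightarrow> aa X < A"
proof -
  assume "h0 \<in> Hs"
  then have "\<bar>x (w 0) - x X\<bar> < r (w 0) + r X" using H_prop unfolding h0_def by blast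
  then show ?thesis unfolding A_def abs_less_iff by linarith
qed

lemma ht_bX: "ht \<in> Hs \<Longrightarrow> bb X > A + 2 * F p"
proof -
  assume "ht \<in> Hs"
  then have "\<bar>x (w t) - x X\<bar> < r (w t) + r X" using H_prop unfolding ht_def by blast
  then show ?thesis using at unfolding abs_less_iff by linarith
qed

lemma X_edge: "e \<in> Hs \<Longrightarrow> X \<in> e \<Longrightarrow> \<exists>l<k. e = {X, w l} \<and> \<bar>x X - x (w l)\<bar> < r X + r (w l)"
proof -
  assume e: "e \<in> Hs" "X \<in> e"
  obtain u v where uv: "e = {u,v}" "u < n" "v < n" "u \<noteq> v" using H_form[OF e(1)] by blast
  obtain v' where v': "e = {X, v'}" "v' \<noteq> X" "v' < n" using uv e(2) by auto
  then have "v' \<in> set c" using notc by blast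
  then obtain l where l: "l < k" "v' = w l" using setc by blast
  have "\<bar>x X - x v'\<bar> < r X + r v'" using H_prop e(1) v'(1) by blast
  then show ?thesis using l v'(1) by blast
qed

lemma HX_A: "bb X = A \<Longrightarrow> e \<in> Hs \<Longrightarrow> X \<in> e \<Longrightarrow> e = h0"
proof -
  assume b: "bb X = A" and e: "e \<in> Hs" "X \<in> e"
  obtain l where l: "l < k" "e = {X, w l}" "\<bar>x X - x (w l)\<bar> < r X + r (w l)" using X_edge[OF e] by blast
  have "aa (w l) < A" using l(3) b unfolding abs_less_iff by linarith
  then have "l = 0" using a_ge[OF l(1)] by force
  then show ?thesis using l(2) by (simp add: h0_def insert_commute)
qed

lemma HX_t: "aa X = A + 2 * F p \<Longrightarrow> e \<in> Hs \<Longrightarrow> X \<in> e \<Longrightarrow> e = ht"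
proof -
  assume b: "aa X = A + 2 * F p" and e: "e \<in> Hs" "X \<in> e"
  obtain l where l: "l < k" "e = {X, w l}" "\<bar>x X - x (w l)\<bar> < r X + r (w l)" using X_edge[OF e] by blast
  have "bb (w l) > A + 2 * F p" using l(3) b unfolding abs_less_iff by linarith
  then have "l = t" using b_le[OF l(1)] by force
  then show ?thesis using l(2) by (simp add: ht_def insert_commute)
qed

lemma two_elems: "finite S \<Longrightarrow> 2 \<le> card S \<Longrightarrow> \<exists>a\<in>S. \<exists>b\<in>S. a \<noteq> b"
  by (metis One_nat_def card_le_Suc0_iff_eq not_less_eq_eq numeral_2_eq_2)

lemma N_Rt: "Lf = {} \<Longrightarrow> 2 \<le> card N \<Longrightarrow> bb X = A"
proof -
  assume L: "Lf = {}" and c2: "2 \<le> card N"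
  obtain a b where ab: "a \<in> N" "b \<in> N" "a \<noteq> b" using two_elems[OF finite_N c2] by blast
  then have "a \<in> Rt" "b \<in> Rt" using N_sub L by auto
  then show ?thesis using Rt2 ab(3) by blast
qed

lemma N_Lf: "Rt = {} \<Longrightarrow> 2 \<le> card N \<Longrightarrow> aa X = A + 2 * F p"
proof -
  assume R: "Rt = {}" and c2: "2 \<le> card N"
  obtain a b where ab: "a \<in> N" "b \<in> N" "a \<noteq> b" using two_elems[OF finite_N c2] by blast
  then have "a \<in> Lf" "b \<in> Lf" using N_sub R by auto
  then show ?thesis using Lf2 ab(3) by blast
qed

lemma X0t: "X \<noteq> w 0" "X \<noteq> w t" using Xc w0c wtc by auto

lemma card3: "card {w 0, w t, X} = 3" using w0t X0t by auto

lemma count_X: "card (contact_edges n r x y) \<le> 2 * n - 2"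
proof -
  have cx: "card (edges_x n r x y) \<le> k + card N" by (rule Ex_card)
  have kk: "k + 1 = n" by (rule kX)
  have cN: "card N \<le> 2" by (rule N_card)
  have wl: "w 0 < n" "w t < n" using wlt by auto
  show ?thesis
  proof (cases "h0 \<in> Hs")
    case h0: True
    show ?thesis
    proof (cases "ht \<in> Hs")
      case ht: True
      have "Lf = {}" using Lf_empty h0_aX h0 by blast
      moreover have "Rt = {}" using Rt_empty ht_bX ht by blast
      ultimately have "N = {}" using N_sub by blast
      then have cx': "card (edges_x n r x y) \<le> n - 1" using cx kk by simp
      have "card Hs + 1 \<le> n - card ({}::nat set)"
        by (rule H_bound[OF _ _ order_refl]) (use n5 in auto)
      then show ?thesis using E_le cx' by simp
    next
      case ht: False
      have L: "Lf = {}" using Lf_empty h0_aX h0 by blast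
      show ?thesis
      proof (cases "card N \<le> 1")
        case True
        have av: "e \<inter> {w t} = {}" if "e \<in> Hs" for e using Hst[OF that] ht that by blast
        have "card Hs + 1 \<le> n - card {w t}"
          by (rule H_bound[OF _ _ order_refl av]) (use n5 wl in auto)
        then show ?thesis using E_le cx True kk by simp
      next
        case False
        then have bX: "bb X = A" using N_Rt L by simp
        define H' where "H' = Hs - {h0}"
        have av: "e \<inter> {w 0, w t, X} = {}" if e: "e \<in> H'" for e
        proof -
          have eH: "e \<in> Hs" "e \<noteq> h0" using e by (auto simp: H'_def)
          have "w 0 \<notin> e" using Hs0 eH by blast
          moreover have "w t \<notin> e" using Hst eH ht by blast
          moreover have "X \<notin> e" using HX_A[OF bX] eH by blast
          ultimately show ?thesis by blast
        qed
        have "card H' + 1 \<le> n - card {w 0, w t, X}"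
          by (rule H_bound[OF _ _ _ av]) (use n5 wl Xn card3 in \<open>auto simp: H'_def\<close>)
        moreover have "card H' = card Hs - 1" using h0 finite_Hs by (simp add: H'_def)
        moreover have "card Hs > 0" using h0 finite_Hs card_gt_0_iff by blast
        ultimately have "card Hs + 3 \<le> n" using card3 by linarith
        then show ?thesis using E_le cx cN kk by linarith
      qed
    qed
  next
    case h0: False
    show ?thesis
    proof (cases "ht \<in> Hs")
      case ht: True
      have R: "Rt = {}" using Rt_empty ht_bX ht by blast
      show ?thesis
      proof (cases "card N \<le> 1")
        case True
        have av: "e \<inter> {w 0} = {}" if "e \<in> Hs" for e using Hs0[OF that] h0 that by blast
        have "card Hs + 1 \<le> n - card {w 0}"
          by (rule H_bound[OF _ _ order_refl av]) (use n5 wl in auto)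
        then show ?thesis using E_le cx True kk by simp
      next
        case False
        then have aX: "aa X = A + 2 * F p" using N_Lf R by simp
        define H' where "H' = Hs - {ht}"
        have av: "e \<inter> {w 0, w t, X} = {}" if e: "e \<in> H'" for e
        proof -
          have eH: "e \<in> Hs" "e \<noteq> ht" using e by (auto simp: H'_def)
          have "w 0 \<notin> e" using Hs0 eH h0 by blast
          moreover have "w t \<notin> e" using Hst eH by blast
          moreover have "X \<notin> e" using HX_t[OF aX] eH by blast
          ultimately show ?thesis by blast
        qed
        have "card H' + 1 \<le> n - card {w 0, w t, X}"
          by (rule H_bound[OF _ _ _ av]) (use n5 wl Xn card3 in \<open>auto simp: H'_def\<close>)
        moreover have "card H' = card Hs - 1" using ht finite_Hs by (simp add: H'_def)
        moreover have "card Hs > 0" using ht finite_Hs card_gt_0_iff by blast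
        ultimately have "card Hs + 3 \<le> n" using card3 by linarith
        then show ?thesis using E_le cx cN kk by linarith
      qed
    next
      case ht: False
      have av: "e \<inter> {w 0, w t} = {}" if "e \<in> Hs" for e using Hs0[OF that] Hst[OF that] h0 ht that by blast
      have "card Hs + 1 \<le> n - card {w 0, w t}"
        by (rule H_bound[OF _ _ order_refl av]) (use n5 wl w0t in auto)
      then have "card Hs + 3 \<le> n" using w0t by simp
      then show ?thesis using E_le cx cN kk by linarith
    qed
  qed
qed

end

context two
begin

theorem two_count: "card (contact_edges n r x y) \<le> 2 * n - 2"
proof (cases "k = n")
  case True then show ?thesis by (rule count_full)
next
  case False
  then have kk: "k + 1 = n" using kn big by simp
  then have "card ({..<n} - set c) = 1" using outside_card by simp
  then obtain X where "{..<n} - set c = {X}" using card_1_singletonE by blast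
  then interpret twoX n r x y c t X using kk by unfold_locales auto
  show ?thesis by (rule count_X)
qed

end


locale altc =
  fixes n :: nat and r x y :: "nat \<Rightarrow> real" and c :: "nat list"
  assumes pack: "homothetic_packing n r x y"
    and cyc: "is_cycle n (edges_x n r x y) c"
    and alt: "\<And>i. eps x c (Suc i) = - eps x c i"
begin

abbreviation k where "k \<equiv> length c"
abbreviation w where "w \<equiv> cw c"
abbreviation e where "e i \<equiv> eps x c i"
abbreviation lo where "lo v \<equiv> y v - r v"
abbreviation hi where "hi v \<equiv> y v + r v"

lemma zc: "zcyc n r x c" by (rule zcyc_x[OF pack cyc])
lemma k3: "k \<ge> 3" using zc_len[OF zc] .
lemma kpos: "k > 0" using k3 by linarith
lemma rw: "r (w i) > 0" using zc_rpos[OF zc] .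
lemma wlt: "w i < n" using zc_cw_lt[OF zc] .

lemma e_pow: "e i = (-1) ^ i * e 0"
  by (induction i) (simp_all add: alt)

lemma k_even: "even k"
proof (rule ccontr)
  assume "odd k"
  have "e k = e 0" by (rule eps_cong) simp
  then have "(-1) ^ k * e 0 = e 0" using e_pow[of k] by simp
  then have "- e 0 = e 0" using \<open>odd k\<close> by simp
  then show False using eps_vals[of x c 0] by auto
qed

lemma step: "x (w (Suc i)) - x (w i) = of_int (e i) * (r (w i) + r (w (Suc i)))"
  using zc_step[OF zc] .

definition L where "L = x (w 0) + of_int (e 0) * r (w 0)"

lemma line: "x (w i) + of_int (e i) * r (w i) = L"
proof (induction i)
  case 0 then show ?case by (simp add: L_def)
next
  case (Suc i)
  have "x (w (Suc i)) + of_int (e (Suc i)) * r (w (Suc i)) = x (w i) + of_int (e i) * r (w i)"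
    using step[of i] alt[of i] by (simp add: algebra_simps)
  then show ?case using Suc by simp
qed

lemma same_fam_x: "e i = e j \<Longrightarrow> \<bar>x (w i) - x (w j)\<bar> = \<bar>r (w i) - r (w j)\<bar>"
proof -
  assume ee: "e i = e j"
  have "x (w i) - x (w j) = of_int (e i) * (r (w j) - r (w i))"
    using line[of i] line[of j] ee by (simp add: algebra_simps)
  then show ?thesis using eps_vals[of x c i] by (auto simp: abs_minus_commute)
qed

lemma same_fam_disj:
  assumes ee: "e i = e j" and ne: "w i \<noteq> w j"
  shows "hi (w i) \<le> lo (w j) \<or> hi (w j) \<le> lo (w i)"
proof -
  have "\<bar>x (w i) - x (w j)\<bar> < r (w i) + r (w j)"
    using same_fam_x[OF ee] rw[of i] rw[of j] by (simp add: abs_if)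
  then have "r (w i) + r (w j) \<le> \<bar>y (w i) - y (w j)\<bar>"
    using sep_of_packing[OF pack wlt wlt ne] by linarith
  then show ?thesis unfolding abs_le_iff by (auto simp: abs_if split: if_splits)
qed

lemma adj: "lo (w i) \<le> hi (w (Suc i)) \<and> lo (w (Suc i)) \<le> hi (w i)"
proof -
  have "{w i, w (Suc i)} \<in> edges_x n r x y" by (rule cyc_edge[OF cyc])
  then have "\<bar>y (w i) - y (w (Suc i))\<bar> \<le> r (w i) + r (w (Suc i))" by (simp add: edges_x_iff)
  then show ?thesis unfolding abs_le_iff by linarith
qed

lemma ne_shift: "0 < d \<Longrightarrow> d < k \<Longrightarrow> w (i + d) \<noteq> w i"
proof
  assume d: "0 < d" "d < k" and eq: "w (i + d) = w i"
  then have "i mod k = (i + d) mod k"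
    using cw_eq_iff[OF zc_dist[OF zc] zc_ne[OF zc]] by simp
  then have "k dvd (i + d) - i" using mod_eq_dvd_iff_nat[of i "i + d" k] by simp
  then have "k dvd d" by simp
  then show False using d by (meson dvd_imp_le not_le)
qed

lemma e_S: "e (Suc i) = - e i" by (rule alt)
lemma e_SS: "e (Suc (Suc i)) = e i" by (simp add: alt)
lemma e_km1: "e (i + k - 1) = - e i"
proof -
  have "e (Suc (i + k - 1)) = e i"
  proof (rule eps_cong)
    have "Suc (i + k - 1) = i + k" using kpos by simp
    then show "Suc (i + k - 1) mod length c = i mod length c" by simp
  qed
  then show ?thesis using alt[of "i + k - 1"] by simp
qed
lemma w_km1: "w (Suc (i + k - 1)) = w i"
proof -
  have "Suc (i + k - 1) = i + k" using kpos by simp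
  then show ?thesis using cw_add[of c i] by simp
qed

definition h where "h = Max ((\<lambda>i. lo (w i)) ` {..<k})"

lemma lo_le: "lo (w i) \<le> h"
proof -
  have "lo (w (i mod k)) \<le> h" unfolding h_def using kpos by (intro Max_ge) auto
  then show ?thesis by (simp add: cw_mod)
qed

lemma h_attained: "\<exists>m. lo (w m) = h"
proof -
  have "h \<in> (\<lambda>i. lo (w i)) ` {..<k}" unfolding h_def using kpos by (intro Max_in) auto
  then show ?thesis by auto
qed

lemma peel1: "\<exists>m. lo (w m) = h \<and> lo (w (Suc m)) = h"
proof -
  obtain m0 where m0: "lo (w m0) = h" using h_attained by blast
  let ?a = "Suc m0" and ?b = "m0 + k - 1"
  have ee: "e ?a = e ?b" using e_S[of m0] e_km1[of m0] by simp
  have ne: "w ?a \<noteq> w ?b"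
  proof -
    have d: "0 < k - 2" "k - 2 < k" using k3 by auto
    have "?b = ?a + (k - 2)" using k3 by simp
    then show ?thesis using ne_shift[OF d, of ?a] by metis
  qed
  have a1: "lo (w m0) \<le> hi (w ?a)" using adj[of m0] by simp
  have a2: "lo (w m0) \<le> hi (w ?b)" using adj[of ?b] w_km1[of m0] by simp
  from same_fam_disj[OF ee ne] show ?thesis
  proof
    assume "hi (w ?a) \<le> lo (w ?b)"
    then have "lo (w ?b) = h" using a1 m0 lo_le[of ?b] by linarith
    then show ?thesis using m0 w_km1[of m0] by (intro exI[of _ ?b]) simp
  next
    assume "hi (w ?b) \<le> lo (w ?a)"
    then have "lo (w ?a) = h" using a2 m0 lo_le[of ?a] by linarith
    then show ?thesis using m0 by (intro exI[of _ m0]) simp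
  qed
qed

lemma peel1':
  obtains m where "lo (w m) = h" "lo (w (Suc m)) = h" "hi (w (m + k - 1)) = h" "hi (w (m + 2)) = h"
proof -
  obtain m where m: "lo (w m) = h" "lo (w (Suc m)) = h" using peel1 by blast
  let ?u = "m + k - 1"
  have u1: "e ?u = e (Suc m)" using e_km1[of m] e_S[of m] by simp
  have u2: "w ?u \<noteq> w (Suc m)"
  proof -
    have d: "0 < k - 2" "k - 2 < k" using k3 by auto
    have "?u = Suc m + (k - 2)" using k3 by simp
    then show ?thesis using ne_shift[OF d, of "Suc m"] by metis
  qed
  have hu: "hi (w ?u) = h"
  proof -
    have "hi (w ?u) \<ge> lo (w m)" using adj[of ?u] w_km1[of m] by simp
    moreover have "hi (w ?u) \<le> lo (w (Suc m))"
      using same_fam_disj[OF u1 u2] m rw[of "Suc m"] lo_le[of ?u] by auto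
    ultimately show ?thesis using m by simp
  qed
  have v1: "e (m + 2) = e m" using e_SS[of m] by simp
  have v2: "w (m + 2) \<noteq> w m" using ne_shift[of 2 m] k3 by auto
  have hv: "hi (w (m + 2)) = h"
  proof -
    have "hi (w (m + 2)) \<ge> lo (w (Suc m))" using adj[of "Suc m"] by (simp add: numeral_2_eq_2)
    moreover have "hi (w (m + 2)) \<le> lo (w m)"
      using same_fam_disj[OF v1 v2] m rw[of m] lo_le[of "m + 2"] by auto
    ultimately show ?thesis using m by simp
  qed
  show ?thesis using that m hu hv by blast
qed


lemma setc: "v \<in> set c \<longleftrightarrow> (\<exists>l<k. v = w l)"
proof
  assume "v \<in> set c"
  then obtain l where "l < k" "c ! l = v" by (auto simp: in_set_conv_nth)
  then show "\<exists>l<k. v = w l" by (auto simp: cw_def)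
next
  assume "\<exists>l<k. v = w l"
  then show "v \<in> set c" using cw_in[OF zc_ne[OF zc]] by auto
qed

lemma win: "w i \<in> set c" using cw_in[OF zc_ne[OF zc]] .

lemma ne_shift': "j = i + d \<Longrightarrow> 0 < d \<Longrightarrow> d < k \<Longrightarrow> w j \<noteq> w i"
  using ne_shift by blast

lemma peel2:
  assumes k5: "k \<ge> 5"
  shows "\<exists>a b. a < n \<and> b < n \<and> a \<noteq> b \<and> r a = r b"
proof -
  obtain m where m: "lo (w m) = h" "lo (w (Suc m)) = h" "hi (w (m + k - 1)) = h" "hi (w (m + 2)) = h"
    using peel1' by blast
  define u where "u = w (m + k - 1)"
  define v' where "v' = w (m + 2)"
  define y0 where "y0 = w (m + 3)"
  define y1 where "y1 = w (m + k - 2)"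
  have eu: "e (m + k - 1) = e (Suc m)" using e_km1[of m] e_S[of m] by simp
  have ev: "e (m + 2) = e m" using e_SS[of m] by (simp add: numeral_2_eq_2)
  have ey0: "e (m + 3) = e (m + k - 1)" using e_km1[of m] e_S e_SS[of "Suc m"] by (simp add: numeral_3_eq_3)
  have sy1: "Suc (m + k - 2) = m + k - 1" using k5 by simp
  have ey1: "e (m + k - 2) = e (m + 2)" using alt[of "m + k - 2"] sy1 eu e_S[of m] ev by simp
  have d_y0u: "u \<noteq> y0" unfolding u_def y0_def by (rule ne_shift'[of _ _ "k - 4"]) (use k5 in auto)
  have d_y1v: "y1 \<noteq> v'" unfolding y1_def v'_def by (rule ne_shift'[of _ _ "k - 4"]) (use k5 in auto)
  have d_uv: "u \<noteq> v'" unfolding u_def v'_def by (rule ne_shift'[of _ _ "k - 3"]) (use k5 in auto)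
  have d_u0: "u \<noteq> w m" unfolding u_def by (rule ne_shift'[of _ _ "k - 1"]) (use k5 in auto)
  have d_u1: "u \<noteq> w (Suc m)" unfolding u_def by (rule ne_shift'[of _ _ "k - 2"]) (use k5 in auto)
  have d_v0: "v' \<noteq> w m" unfolding v'_def by (rule ne_shift'[of _ _ 2]) (use k5 in auto)
  have d_v1: "v' \<noteq> w (Suc m)" unfolding v'_def by (rule ne_shift'[of _ _ 1]) (use k5 in auto)
  have d_y00: "y0 \<noteq> w m" unfolding y0_def by (rule ne_shift'[of _ _ 3]) (use k5 in auto)
  have d_y01: "y0 \<noteq> w (Suc m)" unfolding y0_def by (rule ne_shift'[of _ _ 2]) (use k5 in auto)
  have d_y10: "y1 \<noteq> w m" unfolding y1_def by (rule ne_shift'[of _ _ "k - 2"]) (use k5 in auto)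
  have d_y11: "y1 \<noteq> w (Suc m)" unfolding y1_def by (rule ne_shift'[of _ _ "k - 3"]) (use k5 in auto)
  define S where "S = set c - {w m, w (Suc m)}"
  have uS: "u \<in> S" and vS: "v' \<in> S" and y0S: "y0 \<in> S" and y1S: "y1 \<in> S"
    using win d_u0 d_u1 d_v0 d_v1 d_y00 d_y01 d_y10 d_y11 by (auto simp: S_def u_def v'_def y0_def y1_def)
  have finS: "finite S" by (simp add: S_def)
  define h2 where "h2 = Max ((\<lambda>s. lo s) ` S)"
  have le2: "s \<in> S \<Longrightarrow> lo s \<le> h2" for s unfolding h2_def using finS by (intro Max_ge) auto
  have "h2 \<in> (\<lambda>s. lo s) ` S" unfolding h2_def using finS uS by (intro Max_in) auto
  then obtain z where z: "z \<in> S" "lo z = h2" by auto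
  obtain j where j: "j < k" "z = w j" using z(1) setc by (auto simp: S_def)
  have zm: "z \<noteq> w m" "z \<noteq> w (Suc m)" using z(1) by (auto simp: S_def)
  have fam: "e j = e m \<or> e j = e (Suc m)" using eps_vals[of x c j] eps_vals[of x c m] e_S[of m] by auto
  have rz: "r z > 0" using rw j by simp
  have h2h: "h2 < h"
  proof -
    have "lo z \<noteq> h"
    proof
      assume lz: "lo z = h"
      from fam show False
      proof
        assume "e j = e m"
        from same_fam_disj[OF this] zm j m rw[of m] rz lz show False by auto
      next
        assume "e j = e (Suc m)"
        from same_fam_disj[OF this] zm j m rw[of "Suc m"] rz lz show False by auto
      qed
    qed
    moreover have "lo z \<le> h" using lo_le j by simp
    ultimately show ?thesis using z by simp
  qed
  have hu: "hi u = h" and hv: "hi v' = h" using m by (simp_all add: u_def v'_def)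
  have lu: "lo u \<le> h2" and lv: "lo v' \<le> h2" using le2 uS vS by auto
  have ru: "r u > 0" "r v'> 0" "r y0 > 0" "r y1 > 0" using rw by (auto simp: u_def v'_def y0_def y1_def)
  have A: "lo u = h2 \<or> lo v' = h2"
  proof (rule ccontr)
    assume nA: "\<not> ?thesis"
    then have lt: "lo u < h2" "lo v' < h2" using lu lv by auto
    from fam show False
    proof
      assume "e j = e m"
      then have ee: "e j = e (m + 2)" using ev by simp
      have "z \<noteq> v'" using lt z by auto
      then have "w j \<noteq> w (m + 2)" using j by (simp add: v'_def)
      from same_fam_disj[OF ee this] show False
        using lt z j hv rz h2h by (auto simp: v'_def)
    next
      assume "e j = e (Suc m)"
      then have ee: "e j = e (m + k - 1)" using eu by simp
      have "z \<noteq> u" using lt z by auto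
      then have "w j \<noteq> w (m + k - 1)" using j by (simp add: u_def)
      from same_fam_disj[OF ee this] show False
        using lt z j hu rz h2h by (auto simp: u_def)
    qed
  qed
  have a0: "hi y0 \<ge> lo v'"
    using adj[of "m + 2"] by (simp add: y0_def v'_def numeral_3_eq_3 numeral_2_eq_2)
  have a1: "hi y1 \<ge> lo u"
    using adj[of "m + k - 2"] sy1 by (simp add: y1_def u_def)
  have B: "lo v' = h2 \<Longrightarrow> lo u = h2"
  proof (rule ccontr)
    assume lv2: "lo v' = h2" and "lo u \<noteq> h2"
    then have lt: "lo u < h2" using lu by simp
    have "w (m + 3) \<noteq> w (m + k - 1)" using d_y0u by (simp add: u_def y0_def)
    from same_fam_disj[OF ey0 this] show False
      using lt lv2 a0 hu le2[OF y0S] h2h by (auto simp: u_def y0_def)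
  qed
  have C: "lo u = h2 \<Longrightarrow> lo v' = h2"
  proof (rule ccontr)
    assume lu2: "lo u = h2" and "lo v' \<noteq> h2"
    then have lt: "lo v' < h2" using lv by simp
    have "w (m + k - 2) \<noteq> w (m + 2)" using d_y1v by (simp add: v'_def y1_def)
    from same_fam_disj[OF ey1 this] show False
      using lt lu2 a1 hv le2[OF y1S] h2h by (auto simp: v'_def y1_def)
  qed
  have "lo u = h2" "lo v' = h2" using A B C by auto
  then have "r u = r v'" using hu hv by simp
  moreover have "u < n" "v' < n" using wlt by (auto simp: u_def v'_def)
  ultimately show ?thesis using d_uv by blast
qed

end

lemma corner_in:
  fixes f L h xX yX rX rp rq :: real
  assumes f: "f = 1 \<or> f = -1" and pos: "rX > 0" "rp > 0" "rq > 0"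
    and P: "\<bar>xX - (L - f * rp)\<bar> \<le> rX + rp" "\<bar>yX - (h + rp)\<bar> \<le> rX + rp"
    and Q: "\<bar>xX - (L + f * rq)\<bar> \<le> rX + rq" "\<bar>yX - (h - rq)\<bar> \<le> rX + rq"
  shows "\<bar>xX - L\<bar> \<le> rX \<and> \<bar>yX - h\<bar> \<le> rX"
  using f
proof
  assume "f = 1" then show ?thesis using P Q unfolding abs_le_iff by simp
next
  assume "f = -1" then show ?thesis using P Q unfolding abs_le_iff by simp
qed

lemma corner_hit:
  fixes f L h xX yX rX r1 r2 r3 r4 :: real
  assumes f: "f = 1 \<or> f = -1" and pos: "rX > 0" "r1 > 0" "r2 > 0" "r3 > 0" "r4 > 0"
    and X: "\<bar>xX - L\<bar> \<le> rX" "\<bar>yX - h\<bar> \<le> rX"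
  shows "(\<bar>xX - (L - f * r1)\<bar> < rX + r1 \<and> \<bar>yX - (h + r1)\<bar> < rX + r1) \<or>
         (\<bar>xX - (L + f * r2)\<bar> < rX + r2 \<and> \<bar>yX - (h + r2)\<bar> < rX + r2) \<or>
         (\<bar>xX - (L + f * r3)\<bar> < rX + r3 \<and> \<bar>yX - (h - r3)\<bar> < rX + r3) \<or>
         (\<bar>xX - (L - f * r4)\<bar> < rX + r4 \<and> \<bar>yX - (h - r4)\<bar> < rX + r4)"
proof -
  have X': "L - rX \<le> xX" "xX \<le> L + rX" "h - rX \<le> yX" "yX \<le> h + rX" using X unfolding abs_le_iff by linarith+
  from f show ?thesis
  proof
    assume f1: "f = 1"
    show ?thesis
    proof (cases "xX \<le> L")
      case True
      show ?thesis
      proof (cases "yX \<ge> h")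
        case True
        then have "\<bar>xX - (L - f * r1)\<bar> < rX + r1 \<and> \<bar>yX - (h + r1)\<bar> < rX + r1"
          using f1 X' \<open>xX \<le> L\<close> pos unfolding abs_less_iff by simp
        then show ?thesis by blast
      next
        case False
        then have "\<bar>xX - (L - f * r4)\<bar> < rX + r4 \<and> \<bar>yX - (h - r4)\<bar> < rX + r4"
          using f1 X' \<open>xX \<le> L\<close> pos unfolding abs_less_iff by simp
        then show ?thesis by blast
      qed
    next
      case False
      show ?thesis
      proof (cases "yX \<ge> h")
        case True
        then have "\<bar>xX - (L + f * r2)\<bar> < rX + r2 \<and> \<bar>yX - (h + r2)\<bar> < rX + r2"
          using f1 X' \<open>\<not> xX \<le> L\<close> pos unfolding abs_less_iff by simp
        then show ?thesis by blast
      next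
        case False
        then have "\<bar>xX - (L + f * r3)\<bar> < rX + r3 \<and> \<bar>yX - (h - r3)\<bar> < rX + r3"
          using f1 X' \<open>\<not> xX \<le> L\<close> pos unfolding abs_less_iff by simp
        then show ?thesis by blast
      qed
    qed
  next
    assume f1: "f = -1"
    show ?thesis
    proof (cases "xX \<ge> L")
      case True
      show ?thesis
      proof (cases "yX \<ge> h")
        case True
        then have "\<bar>xX - (L - f * r1)\<bar> < rX + r1 \<and> \<bar>yX - (h + r1)\<bar> < rX + r1"
          using f1 X' \<open>xX \<ge> L\<close> pos unfolding abs_less_iff by simp
        then show ?thesis by blast
      next
        case False
        then have "\<bar>xX - (L - f * r4)\<bar> < rX + r4 \<and> \<bar>yX - (h - r4)\<bar> < rX + r4"
          using f1 X' \<open>xX \<ge> L\<close> pos unfolding abs_less_iff by simp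
        then show ?thesis by blast
      qed
    next
      case False
      show ?thesis
      proof (cases "yX \<ge> h")
        case True
        then have "\<bar>xX - (L + f * r2)\<bar> < rX + r2 \<and> \<bar>yX - (h + r2)\<bar> < rX + r2"
          using f1 X' \<open>\<not> xX \<ge> L\<close> pos unfolding abs_less_iff by simp
        then show ?thesis by blast
      next
        case False
        then have "\<bar>xX - (L + f * r3)\<bar> < rX + r3 \<and> \<bar>yX - (h - r3)\<bar> < rX + r3"
          using f1 X' \<open>\<not> xX \<ge> L\<close> pos unfolding abs_less_iff by simp
        then show ?thesis by blast
      qed
    qed
  qed
qed


lemma E_sub_pairs: "contact_edges n r x y \<subseteq> {B. B \<subseteq> {..<n} \<and> card B = 2}"
proof
  fix e assume "e \<in> contact_edges n r x y"
  then obtain i j where "e = {i,j}" "i < n" "j < n" "i \<noteq> j" using contact_edges_form by blast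
  then show "e \<in> {B. B \<subseteq> {..<n} \<and> card B = 2}" by auto
qed

lemma small_n:
  assumes "n \<le> 4"
  shows "card (contact_edges n r x y) \<le> 2 * n - 2"
proof -
  have "card (contact_edges n r x y) \<le> card {B. B \<subseteq> {..<n} \<and> card B = 2}"
    by (rule card_mono[OF _ E_sub_pairs]) simp
  also have "\<dots> = n choose 2" by (simp add: n_subsets)
  also have "\<dots> \<le> 2 * n - 2"
  proof -
    have "n \<in> {0,1,2,3,4}" using assms by auto
    then show ?thesis by (auto simp: choose_two)
  qed
  finally show ?thesis .
qed

context altc
begin

lemma xw: "x (w i) = L - of_int (e i) * r (w i)" using line[of i] by simp

lemma k4_count:
  assumes k4: "k = 4" and n5: "n = 5"
  shows "card (contact_edges n r x y) \<le> 8"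
proof -
  obtain m where m: "lo (w m) = h" "lo (w (Suc m)) = h" "hi (w (m + k - 1)) = h" "hi (w (m + 2)) = h"
    using peel1' by blast
  define P1 where "P1 = w m"
  define P2 where "P2 = w (m + 1)"
  define P3 where "P3 = w (m + 3)"
  define P4 where "P4 = w (m + 2)"
  define f :: real where "f = of_int (e m)"
  have f: "f = 1 \<or> f = -1" using eps_vals[of x c m] by (auto simp: f_def)
  have e1: "e (m + 1) = - e m" using e_S[of m] by simp
  have e2: "e (m + 2) = e m" using e_SS[of m] by (simp add: numeral_2_eq_2)
  have e3: "e (m + 3) = - e m" using e_SS[of "Suc m"] e_S[of m] by (simp add: numeral_3_eq_3)
  have x1: "x P1 = L - f * r P1" using xw[of m] by (simp add: P1_def f_def)
  have x2: "x P2 = L + f * r P2" using xw[of "m + 1"] e1 by (simp add: P2_def f_def)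
  have x3: "x P3 = L + f * r P3" using xw[of "m + 3"] e3 by (simp add: P3_def f_def)
  have x4: "x P4 = L - f * r P4" using xw[of "m + 2"] e2 by (simp add: P4_def f_def)
  have m3: "m + k - 1 = m + 3" using k4 by simp
  have y1: "y P1 = h + r P1" using m(1) by (simp add: P1_def)
  have y2: "y P2 = h + r P2" using m(2) by (simp add: P2_def)
  have y3: "y P3 = h - r P3" using m(3) m3 by (simp add: P3_def)
  have y4: "y P4 = h - r P4" using m(4) by (simp add: P4_def)
  have rp: "r P1 > 0" "r P2 > 0" "r P3 > 0" "r P4 > 0" using rw by (auto simp: P1_def P2_def P3_def P4_def)
  have d12: "P2 \<noteq> P1" unfolding P1_def P2_def by (rule ne_shift'[of _ _ 1]) (use k4 in auto)
  have d13: "P3 \<noteq> P1" unfolding P1_def P3_def by (rule ne_shift'[of _ _ 3]) (use k4 in auto)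
  have d14: "P4 \<noteq> P1" unfolding P1_def P4_def by (rule ne_shift'[of _ _ 2]) (use k4 in auto)
  have d23: "P3 \<noteq> P2" unfolding P2_def P3_def by (rule ne_shift'[of _ _ 2]) (use k4 in auto)
  have d24: "P4 \<noteq> P2" unfolding P2_def P4_def by (rule ne_shift'[of _ _ 1]) (use k4 in auto)
  have d34: "P3 \<noteq> P4" unfolding P3_def P4_def by (rule ne_shift'[of _ _ 1]) (use k4 in auto)
  define V where "V = {P1, P2, P3, P4}"
  have cV: "card V = 4" using d12 d13 d14 d23 d24 d34 by (simp add: V_def)
  have Vs: "V \<subseteq> set c" using win by (auto simp: V_def P1_def P2_def P3_def P4_def)
  have cs: "card (set c) = 4" using distinct_card[OF zc_dist[OF zc]] k4 by simp
  have Vc: "V = set c" by (rule card_subset_eq[OF _ Vs]) (use cV cs in auto)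
  have out: "card ({..<n} - set c) = 1"
    using zc_set[OF zc] cs n5 by (simp add: card_Diff_subset)
  then obtain X where X: "{..<n} - set c = {X}" using card_1_singletonE by blast
  have Xn: "X < n" and XV: "X \<notin> V" using X Vc by auto
  have rX: "r X > 0" using pos_of_packing[OF pack Xn] .
  have posr: "\<forall>i<n. r i > 0" using pos_of_packing[OF pack] by blast
  have Pn: "P1 < n" "P2 < n" "P3 < n" "P4 < n" using wlt by (auto simp: P1_def P2_def P3_def P4_def)
  have XP: "X \<noteq> P1" "X \<noteq> P2" "X \<noteq> P3" "X \<noteq> P4" using XV by (auto simp: V_def)
  have nohit: False if X0: "\<bar>x X - L\<bar> \<le> r X" "\<bar>y X - h\<bar> \<le> r X"
  proof -
    have H: "(\<bar>x X - (L - f * r P1)\<bar> < r X + r P1 \<and> \<bar>y X - (h + r P1)\<bar> < r X + r P1) \<or>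
         (\<bar>x X - (L + f * r P2)\<bar> < r X + r P2 \<and> \<bar>y X - (h + r P2)\<bar> < r X + r P2) \<or>
         (\<bar>x X - (L + f * r P3)\<bar> < r X + r P3 \<and> \<bar>y X - (h - r P3)\<bar> < r X + r P3) \<or>
         (\<bar>x X - (L - f * r P4)\<bar> < r X + r P4 \<and> \<bar>y X - (h - r P4)\<bar> < r X + r P4)"
      by (rule corner_hit[OF f rX rp X0])
    have s1: "r X + r P1 \<le> \<bar>x X - x P1\<bar> \<or> r X + r P1 \<le> \<bar>y X - y P1\<bar>" using sep_of_packing[OF pack Xn Pn(1) XP(1)] .
    have s2: "r X + r P2 \<le> \<bar>x X - x P2\<bar> \<or> r X + r P2 \<le> \<bar>y X - y P2\<bar>" using sep_of_packing[OF pack Xn Pn(2) XP(2)] .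
    have s3: "r X + r P3 \<le> \<bar>x X - x P3\<bar> \<or> r X + r P3 \<le> \<bar>y X - y P3\<bar>" using sep_of_packing[OF pack Xn Pn(3) XP(3)] .
    have s4: "r X + r P4 \<le> \<bar>x X - x P4\<bar> \<or> r X + r P4 \<le> \<bar>y X - y P4\<bar>" using sep_of_packing[OF pack Xn Pn(4) XP(4)] .
    show False using H s1 s2 s3 s4 x1 x2 x3 x4 y1 y2 y3 y4 by auto
  qed
  have cX: "\<bar>x X - x P\<bar> \<le> r X + r P \<and> \<bar>y X - y P\<bar> \<le> r X + r P" if "{X, P} \<in> contact_edges n r x y" for P
    using that contact_iff[OF posr] by blast
  have nd1: "\<not> ({X, P1} \<in> contact_edges n r x y \<and> {X, P3} \<in> contact_edges n r x y)"
  proof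
    assume a: "{X, P1} \<in> contact_edges n r x y \<and> {X, P3} \<in> contact_edges n r x y"
    have "\<bar>x X - L\<bar> \<le> r X \<and> \<bar>y X - h\<bar> \<le> r X"
      by (rule corner_in[OF f rX rp(1) rp(3)]) (use cX[of P1] cX[of P3] a x1 x3 y1 y3 in auto)
    then show False using nohit by blast
  qed
  have f': "- f = 1 \<or> - f = -1" using f by auto
  have nd2: "\<not> ({X, P2} \<in> contact_edges n r x y \<and> {X, P4} \<in> contact_edges n r x y)"
  proof
    assume a: "{X, P2} \<in> contact_edges n r x y \<and> {X, P4} \<in> contact_edges n r x y"
    have "\<bar>x X - L\<bar> \<le> r X \<and> \<bar>y X - h\<bar> \<le> r X"
      by (rule corner_in[OF f' rX rp(2) rp(4)]) (use cX[of P2] cX[of P4] a x2 x4 y2 y4 in auto)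
    then show False using nohit by blast
  qed
  define NX where "NX = {P \<in> V. {X, P} \<in> contact_edges n r x y}"
  have NXc: "card NX \<le> 2"
  proof -
    have "NX \<subseteq> {P2, P3} \<or> NX \<subseteq> {P2, P1} \<or> NX \<subseteq> {P4, P3} \<or> NX \<subseteq> {P4, P1}"
      using nd1 nd2 by (auto simp: NX_def V_def)
    moreover have "card {a, b} \<le> 2" for a b :: nat by (cases "a = b") auto
    ultimately show ?thesis by (metis card_mono finite.emptyI finite.insertI le_trans)
  qed
  have sub: "contact_edges n r x y \<subseteq> {B. B \<subseteq> V \<and> card B = 2} \<union> (\<lambda>P. {X, P}) ` NX"
  proof
    fix ed assume ed: "ed \<in> contact_edges n r x y"
    then obtain i j where ij: "ed = {i,j}" "i < n" "j < n" "i \<noteq> j" using contact_edges_form by blast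
    have iV: "i \<in> V \<or> i = X" and jV: "j \<in> V \<or> j = X" using ij X Vc by auto
    show "ed \<in> {B. B \<subseteq> V \<and> card B = 2} \<union> (\<lambda>P. {X, P}) ` NX"
    proof (cases "i = X")
      case True
      then have "j \<in> V" using jV ij by auto
      then have "j \<in> NX" using ed ij True by (simp add: NX_def)
      then show ?thesis using ij True by blast
    next
      case False
      then have iV': "i \<in> V" using iV by auto
      show ?thesis
      proof (cases "j = X")
        case True
        then have "i \<in> NX" using ed ij iV' by (simp add: NX_def insert_commute)
        then show ?thesis using ij True by (auto simp: insert_commute)
      next
        case False
        then show ?thesis using iV' jV ij by auto
      qed
    qed
  qed
  have finV: "finite V" by (simp add: V_def)
  have finNX: "finite NX" using finV by (simp add: NX_def)
  have "card (contact_edges n r x y) \<le> card ({B. B \<subseteq> V \<and> card B = 2} \<union> (\<lambda>P. {X, P}) ` NX)"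
    by (rule card_mono[OF _ sub]) (use finV finNX in simp)
  also have "\<dots> \<le> card {B. B \<subseteq> V \<and> card B = 2} + card ((\<lambda>P. {X, P}) ` NX)" by (rule card_Un_le)
  also have "card {B. B \<subseteq> V \<and> card B = 2} = 6" using n_subsets[OF finV, of 2] cV by (simp add: numeral_eq_Suc)
  also have "card ((\<lambda>P. {X, P}) ` NX) \<le> 2" using card_image_le[OF finNX] NXc by (meson le_trans)
  finally show ?thesis by simp
qed

lemma alt_count:
  assumes wg: "weak_generic n r" and n5: "5 \<le> n" and big: "n \<le> k + 1"
  shows "card (contact_edges n r x y) \<le> 2 * n - 2"
proof -
  have kn: "k \<le> n" using len_le_n[OF cyc] .
  show ?thesis
  proof (cases "k \<ge> 5")
    case True
    then obtain a b where ab: "a < n" "b < n" "a \<noteq> b" "r a = r b" using peel2 by blast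
    have "even k" by (rule k_even)
    then have "k \<ge> 6" using True by presburger
    then have "card {a} + card {b} + 4 \<le> n" using kn by simp
    then show ?thesis using wg_sets[OF wg, of "{a}" "{b}"] ab by auto
  next
    case False
    have "even k" by (rule k_even)
    then have "k = 4" using False k3 by presburger
    then have "n = 5" using n5 big by simp
    then show ?thesis using k4_count \<open>k = 4\<close> by simp
  qed
qed

end

lemma two_struct:
  assumes zc: "zcyc n r z c" and e0: "eps z c 0 = 1" and ek: "eps z c (length c - 1) = -1"
    and ch: "card (chg z c) \<le> 3"
  shows "\<exists>t. 1 \<le> t \<and> t < length c \<and> (\<forall>i<t. eps z c i = 1) \<and> (\<forall>i. t \<le> i \<longrightarrow> i < length c \<longrightarrow> eps z c i = -1)"
proof -
  let ?k = "length c"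
  let ?e = "eps z c"
  have k3: "?k \<ge> 3" using zc_len[OF zc] .
  have prev: "?e (i + ?k - 1) = ?e (i - 1)" if "i \<ge> 1" for i
  proof (rule eps_cong)
    have "i + ?k - 1 = (i - 1) + ?k" using that by simp
    then show "(i + ?k - 1) mod ?k = (i - 1) mod ?k" by simp
  qed
  have vals: "?e i = 1 \<or> ?e i = -1" for i by (rule eps_vals)
  define t where "t = (LEAST i. ?e i = -1)"
  have et: "?e t = -1" unfolding t_def by (rule LeastI[of _ "?k - 1"]) (rule ek)
  have tle: "t \<le> ?k - 1" unfolding t_def by (rule Least_le) (rule ek)
  have before: "?e i = 1" if "i < t" for i
  proof -
    have "?e i \<noteq> -1" using that not_less_Least unfolding t_def by blast
    then show ?thesis using vals[of i] by blast
  qed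
  have t1: "t \<ge> 1" using et e0 by (cases t) auto
  have after: "?e i = -1" if i: "t \<le> i" "i < ?k" for i
  proof (rule ccontr)
    assume "?e i \<noteq> -1"
    then have ei: "?e i = 1" using vals[of i] by blast
    then have ti: "t < i" using i et by (cases "t = i") auto
    define j1 where "j1 = (LEAST j. t < j \<and> ?e j = 1)"
    have j1: "t < j1" "?e j1 = 1" unfolding j1_def by (rule LeastI2[of _ i], use ti ei in auto)+
    have j1i: "j1 \<le> i" unfolding j1_def by (rule Least_le) (use ti ei in auto)
    have j1k: "j1 < ?k - 1"
    proof -
      have "j1 \<noteq> ?k - 1" using j1(2) ek by auto
      then show ?thesis using j1i i by simp
    qed
    have j1p: "?e (j1 - 1) = -1"
    proof (cases "j1 - 1 = t")
      case True then show ?thesis using et by simp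
    next
      case False
      then have "t < j1 - 1" "j1 - 1 < j1" using j1 by auto
      then have "\<not> (t < j1 - 1 \<and> ?e (j1 - 1) = 1)" using not_less_Least unfolding j1_def by blast
      then show ?thesis using vals[of "j1 - 1"] \<open>t < j1 - 1\<close> by blast
    qed
    define j2 where "j2 = (LEAST j. j1 < j \<and> ?e j = -1)"
    have j2: "j1 < j2" "?e j2 = -1" unfolding j2_def by (rule LeastI2[of _ "?k - 1"], use j1k ek in auto)+
    have j2k: "j2 \<le> ?k - 1" unfolding j2_def by (rule Least_le) (use j1k ek in auto)
    have j2p: "?e (j2 - 1) = 1"
    proof (cases "j2 - 1 = j1")
      case True then show ?thesis using j1 by simp
    next
      case False
      then have "j1 < j2 - 1" "j2 - 1 < j2" using j2 by auto
      then have "\<not> (j1 < j2 - 1 \<and> ?e (j2 - 1) = -1)" using not_less_Least unfolding j2_def by blast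
      then show ?thesis using vals[of "j2 - 1"] \<open>j1 < j2 - 1\<close> by blast
    qed
    have "0 \<in> chg z c"
    proof -
      have "?e (0 + ?k - 1) = -1" using ek by simp
      then show ?thesis unfolding chg_def[OF zc] using e0 k3 by auto
    qed
    moreover have "t \<in> chg z c" unfolding chg_def[OF zc] using prev[OF t1] before[of "t - 1"] t1 et tle k3 by auto
    moreover have "j1 \<in> chg z c" unfolding chg_def[OF zc] using prev[of j1] j1 j1p j1k by auto
    moreover have "j2 \<in> chg z c" unfolding chg_def[OF zc] using prev[of j2] j2 j2p j2k j1 by auto
    ultimately have "{0, t, j1, j2} \<subseteq> chg z c" by auto
    moreover have "finite (chg z c)" by (simp add: chg_def[OF zc])
    ultimately have "card {0, t, j1, j2} \<le> 3" using ch card_mono le_trans by blast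
    moreover have "card {0, t, j1, j2} = 4" using t1 j1 j2 by auto
    ultimately show False by simp
  qed
  show ?thesis using t1 tle k3 before after by (intro exI[of _ t]) auto
qed

theorem main_x:
  assumes pack: "homothetic_packing n r x y" and wg: "weak_generic n r"
    and cyc: "is_cycle n (edges_x n r x y) c" and big: "n \<le> length c + 1"
  shows "card (contact_edges n r x y) \<le> 2 * n - 2"
proof (cases "n \<le> 4")
  case True then show ?thesis by (rule small_n)
next
  case False
  then have n5: "5 \<le> n" by simp
  have zc: "zcyc n r x c" by (rule zcyc_x[OF pack cyc])
  let ?k = "length c"
  have kpos: "?k > 0" using zc_len[OF zc] by linarith
  have cne: "c \<noteq> []" using zc_ne[OF zc] .
  obtain a1 where a1: "a1 < ?k" "eps x c a1 = 1" using zc_both_signs[OF zc] by blast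
  obtain a2 where a2: "a2 < ?k" "eps x c a2 = -1" using zc_both_signs[OF zc] by blast
  have per1: "(eps x c (a mod ?k) = 1) = (eps x c a = 1)" for a by (simp add: eps_mod)
  obtain s where s: "s < ?k" "\<not> eps x c (s + ?k - 1) = 1" "eps x c s = 1"
    using entry_exists[of ?k "\<lambda>i. eps x c i = 1", OF kpos per1 a1 a2(1)] a2(2) by auto
  define c' where "c' = rotate s c"
  have cyc': "is_cycle n (edges_x n r x y) c'" unfolding c'_def by (rule is_cycle_rotate[OF cyc])
  have len': "length c' = ?k" by (simp add: c'_def)
  have ep: "eps x c' i = eps x c (i + s)" for i unfolding c'_def by (rule eps_rotate[OF cne])
  have e0: "eps x c' 0 = 1" using ep[of 0] s by simp
  have ek: "eps x c' (length c' - 1) = -1"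
  proof -
    have "eps x c' (length c' - 1) = eps x c (s + ?k - 1)" using ep[of "?k - 1"] len' kpos by (simp add: add.commute)
    then show ?thesis using s(2) eps_vals[of x c "s + ?k - 1"] by auto
  qed
  have zc': "zcyc n r x c'" by (rule zcyc_x[OF pack cyc'])
  have big': "n \<le> length c' + 1" using big len' by simp
  show ?thesis
  proof (cases "\<forall>i. eps x c' (Suc i) = - eps x c' i")
    case True
    interpret altc n r x y c' using pack cyc' True by unfold_locales auto
    show ?thesis by (rule alt_count[OF wg n5 big'])
  next
    case False
    then have "n - length c' + card (chg x c') \<le> 3" using alt_or_few[OF zc' wg] by blast
    then have "card (chg x c') \<le> 3" by simp
    then obtain t where t: "1 \<le> t" "t < length c'" "\<forall>i<t. eps x c' i = 1"
        "\<forall>i. t \<le> i \<longrightarrow> i < length c' \<longrightarrow> eps x c' i = -1"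
      using two_struct[OF zc' e0 ek] by blast
    interpret two n r x y c' t using pack wg cyc' big' n5 t by unfold_locales auto
    show ?thesis by (rule two_count)
  qed
qed

theorem lemma19:
  fixes n :: nat and r x y :: "nat \<Rightarrow> real"
  assumes "homothetic_packing n r x y"
    and "weak_generic n r"
    and "\<exists>c. (is_cycle n (edges_x n r x y) c \<or> is_cycle n (edges_y n r x y) c)
              \<and> length c + 1 \<ge> n"
  shows "card (contact_edges n r x y) \<le> 2 * n - 2"
proof -
  obtain c where c: "is_cycle n (edges_x n r x y) c \<or> is_cycle n (edges_y n r x y) c" "length c + 1 \<ge> n"
    using assms(3) by blast
  from c(1) show ?thesis
  proof
    assume "is_cycle n (edges_x n r x y) c"
    then show ?thesis using main_x[OF assms(1,2)] c(2) by blast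
  next
    assume cy: "is_cycle n (edges_y n r x y) c"
    have p': "homothetic_packing n r y x" using assms(1) packing_swap by blast
    have cy': "is_cycle n (edges_x n r y x) c" using cy edges_x_swap[of n r y x] by simp
    have "card (contact_edges n r y x) \<le> 2 * n - 2" using main_x[OF p' assms(2) cy'] c(2) by blast
    then show ?thesis using contact_swap[of n r x y] by simp
  qed
qed


end
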